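(* Let $X=(X,d,\mathcal M,\mu)$ be a separable metric measure space and $1\le p<\infty$. Suppose that for every $x\in X_0$: $B(x,\lambda)\in\mathcal M$ and $\mu(B(x,\lambda))>0$ for each $\lambda>0$, and $\mu(B(x,\lambda'(x)))<\infty$ for some $\lambda'(x)>0$. Suppose also that $X\setminus X_0$ is not dense in $X$. Then $C_a(X)$ is contained in some $Z_\sigma$-set in $L^p(X)$, and hence so is $C_u(X)$.
   Context: A metric measure space $X=(X,d,\mathcal M,\mu)$ consists of a metric space $(X,d)$, a $\sigma$-algebra $\mathcal M$ and a measure $\mu$ on $\mathcal M$. $X_0=\{x\in X:\{x\}\in\mathcal M,\ \mu(\{x\})=0\}$, $B(x,\lambda)=\{y:d(x,y)<\lambda\}$. $L^p(X)$ is the Banach space of $\mathcal M$-measurable $f:X\to\mathbb R$ with $\|f\|_p=(\int_X|f|^pd\mu)^{1/p}<\infty$, modulo a.e. equality. $C_u(X)$ is the set of classes containing a uniformly continuous function; $C_a(X)$ is the set of $f\in L^p(X)$ such that $f|_{X\setminus E}$ is continuous for some $E\subset X$ with $\mu(E)=0$. A closed set $A$ in a space $M$ is a $Z$-set if for every open cover $\mathcal U$ of $M$ there is a continuous $f:M\to M$ with $f(M)\cap A=\emptyset$ such that for each $z\in M$ some $U\in\mathcal U$ contains $\{z,f(z)\}$. A $Z_\sigma$-set is a countable union of $Z$-sets. *)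

theory Defs
  imports "HOL-Analysis.Analysis" "HOL-Probability.Probability"
begin

text \<open>The metric measure space is given by a measure M (space M = X, sets M = the
sigma-algebra, emeasure M = mu) together with a metric d on space M.\<close>

definition X0 :: "'a measure \<Rightarrow> 'a set" where
  "X0 M = {x \<in> space M. {x} \<in> sets M \<and> emeasure M {x} = 0}"

definition ae_class :: "'a measure \<Rightarrow> ('a \<Rightarrow> real) \<Rightarrow> ('a \<Rightarrow> real) set" where
  "ae_class M f = {g \<in> borel_measurable M. AE x in M. g x = f x}"

definition Lp_carrier :: "'a measure \<Rightarrow> real \<Rightarrow> ('a \<Rightarrow> real) set set" where
  "Lp_carrier M p = {ae_class M f | f. f \<in> borel_measurable M \<and>
                         integrable M (\<lambda>x. \<bar>f x\<bar> powr p)}"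

definition Lp_dist :: "'a measure \<Rightarrow> real \<Rightarrow> ('a \<Rightarrow> real) set \<Rightarrow> ('a \<Rightarrow> real) set \<Rightarrow> real" where
  "Lp_dist M p U V = (let f = (SOME f. f \<in> U); g = (SOME g. g \<in> V)
       in (integral\<^sup>L M (\<lambda>x. \<bar>f x - g x\<bar> powr p)) powr (1 / p))"

definition Lp_topology :: "'a measure \<Rightarrow> real \<Rightarrow> ('a \<Rightarrow> real) set topology" where
  "Lp_topology M p = Metric_space.mtopology (Lp_carrier M p) (Lp_dist M p)"

definition unif_cont_on :: "'a set \<Rightarrow> ('a \<Rightarrow> 'a \<Rightarrow> real) \<Rightarrow> ('a \<Rightarrow> real) \<Rightarrow> bool" where
  "unif_cont_on X d f \<longleftrightarrow> (\<forall>e>0. \<exists>\<delta>>0. \<forall>x\<in>X. \<forall>y\<in>X. d x y < \<delta> \<longrightarrow> \<bar>f x - f y\<bar> < e)"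

definition Cu :: "'a measure \<Rightarrow> ('a \<Rightarrow> 'a \<Rightarrow> real) \<Rightarrow> real \<Rightarrow> ('a \<Rightarrow> real) set set" where
  "Cu M d p = {U \<in> Lp_carrier M p. \<exists>f\<in>U. unif_cont_on (space M) d f}"

definition Ca :: "'a measure \<Rightarrow> ('a \<Rightarrow> 'a \<Rightarrow> real) \<Rightarrow> real \<Rightarrow> ('a \<Rightarrow> real) set set" where
  "Ca M d p = {U \<in> Lp_carrier M p. \<exists>f\<in>U. \<exists>E. E \<in> null_sets M \<and>
      continuous_map (subtopology (Metric_space.mtopology (space M) d) (space M - E)) euclideanreal f}"

definition Z_set :: "'b topology \<Rightarrow> 'b set \<Rightarrow> bool" where
  "Z_set T A \<longleftrightarrow> closedin T A \<and>
     (\<forall>\<U>. (\<forall>U\<in>\<U>. openin T U) \<and> \<Union>\<U> = topspace T \<longrightarrow>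
        (\<exists>f. continuous_map T T f \<and> f ` topspace T \<inter> A = {} \<and>
             (\<forall>z\<in>topspace T. \<exists>U\<in>\<U>. z \<in> U \<and> f z \<in> U)))"

definition Z_sigma_set :: "'b topology \<Rightarrow> 'b set \<Rightarrow> bool" where
  "Z_sigma_set T S \<longleftrightarrow> (\<exists>\<A>. countable \<A> \<and> (\<forall>A\<in>\<A>. Z_set T A) \<and> S = \<Union>\<A>)"

end

theory Submission
  imports Defs
begin


lemma powr_sum_bound:
  fixes x y a b p :: real
  assumes p: "1 \<le> p" and x: "0 \<le> x" and y: "0 \<le> y" and a: "0 < a" and b: "0 < b"
  shows "(x + y) powr p \<le> (a + b) powr (p - 1) * (a powr (1 - p) * x powr p + b powr (1 - p) * y powr p)"
proof -
  define t where "t = a / (a + b)"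
  have t01: "0 < t" "t < 1" using a b by (auto simp: t_def field_simps)
  have e4: "1 - t = b / (a + b)" using a b by (simp add: t_def field_simps)
  have "x + y = (a + b) * (t * (x / a) + (1 - t) * (y / b))"
  proof -
    have "(a + b) * (t * (x / a)) = x" using a b by (simp add: t_def)
    moreover have "(a + b) * ((1 - t) * (y / b)) = y" unfolding e4 using a b by simp
    ultimately show ?thesis by (simp add: distrib_left)
  qed
  hence "(x + y) powr p = (a + b) powr p * (t * (x / a) + (1 - t) * (y / b)) powr p"
    using a b x y by (simp add: powr_mult)
  also have "(t * (x / a) + (1 - t) * (y / b)) powr p \<le> t * (x / a) powr p + (1 - t) * (y / b) powr p"
  proof (cases "x = 0 \<or> y = 0")
    case True
    then show ?thesis
    proof
      assume x0: "x = 0"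
      have "((1 - t) * (y / b)) powr p = (1 - t) powr p * (y / b) powr p"
        using t01 y b by (metis powr_mult divide_nonneg_pos less_eq_real_def diff_gt_0_iff_gt)
      also have "\<dots> \<le> (1 - t) * (y / b) powr p"
        using t01 p powr_mono'[of 1 p "1 - t"] by (intro mult_right_mono) auto
      finally show ?thesis using x0 p by simp
    next
      assume y0: "y = 0"
      have "(t * (x / a)) powr p = t powr p * (x / a) powr p"
        using t01 x a by (metis powr_mult divide_nonneg_pos less_eq_real_def)
      also have "\<dots> \<le> t * (x / a) powr p"
        using t01 p powr_mono'[of 1 p t] by (intro mult_right_mono) auto
      finally show ?thesis using y0 p by simp
    qed
  next
    case False
    hence "0 < x / a" "0 < y / b" using x y a b by auto
    then show ?thesis
      using powr_convex[OF p] t01 unfolding convex_on_def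
      by (simp only: greaterThan_iff real_scaleR_def)
  qed
  hence "(a + b) powr p * (t * (x / a) + (1 - t) * (y / b)) powr p
      \<le> (a + b) powr p * (t * (x / a) powr p + (1 - t) * (y / b) powr p)"
    using a b by (intro mult_left_mono) auto
  also have "\<dots> = (a + b) powr (p - 1) * (a powr (1 - p) * x powr p + b powr (1 - p) * y powr p)"
  proof -
    have e1: "(a + b) powr p = (a + b) powr (p - 1) * (a + b)"
      using a b by (simp add: powr_diff)
    have e2: "(x / a) powr p = x powr p * a powr (1 - p) / a"
      using a x by (simp add: powr_divide powr_diff)
    have e3: "(y / b) powr p = y powr p * b powr (1 - p) / b"
      using b y by (simp add: powr_divide powr_diff)
    have gen: "\<And>P X Y. P * (a + b) * (a / (a + b) * (X / a) + b / (a + b) * (Y / b)) = P * (X + Y)"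
    proof -
      fix P X Y
      have 1: "a / (a + b) * (X / a) = X / (a + b)" using a by simp
      have 2: "b / (a + b) * (Y / b) = Y / (a + b)" using b by simp
      have "a + b \<noteq> 0" using a b by simp
      then show "P * (a + b) * (a / (a + b) * (X / a) + b / (a + b) * (Y / b)) = P * (X + Y)"
        unfolding 1 2 add_divide_distrib[symmetric] by simp
    qed
    show ?thesis unfolding e1 e2 e3 e4 unfolding t_def
      using gen[of "(a + b) powr (p - 1)" "x powr p * a powr (1 - p)" "y powr p * b powr (1 - p)"]
      by (simp add: mult.commute)
  qed
  finally show ?thesis .
qed



locale LpS =
  fixes M :: "'a measure" and p :: real
  assumes p1: "1 \<le> p"
begin

lemma p0: "0 < p" using p1 by simp

definition Lpf :: "('a \<Rightarrow> real) \<Rightarrow> bool" where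
  "Lpf f \<longleftrightarrow> f \<in> borel_measurable M \<and> integrable M (\<lambda>x. \<bar>f x\<bar> powr p)"

definition nrm :: "('a \<Rightarrow> real) \<Rightarrow> real" where
  "nrm f = (\<integral>x. \<bar>f x\<bar> powr p \<partial>M) powr (1/p)"

lemma int_nonneg: "0 \<le> (\<integral>x. \<bar>f x\<bar> powr p \<partial>M)"
  by (intro integral_nonneg_AE) auto

lemma nrm_nonneg: "0 \<le> nrm f"
  unfolding nrm_def by simp

lemma nrm_pow: "nrm f powr p = (\<integral>x. \<bar>f x\<bar> powr p \<partial>M)"
  unfolding nrm_def using int_nonneg[of f] p0 by (simp add: powr_powr)

lemma nrm_le_iff: assumes "0 \<le> r" shows "nrm f \<le> r \<longleftrightarrow> (\<integral>x. \<bar>f x\<bar> powr p \<partial>M) \<le> r powr p"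
proof
  assume "nrm f \<le> r"
  hence "nrm f powr p \<le> r powr p" using nrm_nonneg p0 by (intro powr_mono2) auto
  thus "(\<integral>x. \<bar>f x\<bar> powr p \<partial>M) \<le> r powr p" by (simp add: nrm_pow)
next
  assume "(\<integral>x. \<bar>f x\<bar> powr p \<partial>M) \<le> r powr p"
  hence "(\<integral>x. \<bar>f x\<bar> powr p \<partial>M) powr (1/p) \<le> (r powr p) powr (1/p)"
    using int_nonneg p0 by (intro powr_mono2) auto
  thus "nrm f \<le> r" using assms p0 by (simp add: nrm_def powr_powr)
qed

lemma nrm_less_iff: assumes "0 \<le> r" shows "nrm f < r \<longleftrightarrow> (\<integral>x. \<bar>f x\<bar> powr p \<partial>M) < r powr p"
proof
  assume "nrm f < r"
  hence "nrm f powr p < r powr p" using nrm_nonneg p0 by (intro powr_less_mono2) auto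
  thus "(\<integral>x. \<bar>f x\<bar> powr p \<partial>M) < r powr p" by (simp add: nrm_pow)
next
  assume "(\<integral>x. \<bar>f x\<bar> powr p \<partial>M) < r powr p"
  hence "(\<integral>x. \<bar>f x\<bar> powr p \<partial>M) powr (1/p) < (r powr p) powr (1/p)"
    using int_nonneg p0 by (intro powr_less_mono2) auto
  thus "nrm f < r" using assms p0 by (simp add: nrm_def powr_powr)
qed

lemma Lpf_mono:
  assumes g: "Lpf g" and f: "f \<in> borel_measurable M" and le: "AE x in M. \<bar>f x\<bar> \<le> \<bar>g x\<bar>"
  shows "Lpf f" "nrm f \<le> nrm g"
proof -
  have le2: "AE x in M. \<bar>f x\<bar> powr p \<le> \<bar>g x\<bar> powr p"
    using le by (rule eventually_mono) (rule powr_mono2, use p0 in auto)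
  have gi: "integrable M (\<lambda>x. \<bar>g x\<bar> powr p)" using g by (simp add: Lpf_def)
  have fm: "(\<lambda>x. \<bar>f x\<bar> powr p) \<in> borel_measurable M" using f by measurable
  have le3: "AE x in M. norm (\<bar>f x\<bar> powr p) \<le> norm (\<bar>g x\<bar> powr p)"
    using le2 by (rule eventually_mono) simp
  have i: "integrable M (\<lambda>x. \<bar>f x\<bar> powr p)"
    by (rule Bochner_Integration.integrable_bound[OF gi fm le3])
  thus "Lpf f" using f by (simp add: Lpf_def)
  have "(\<integral>x. \<bar>f x\<bar> powr p \<partial>M) \<le> (\<integral>x. \<bar>g x\<bar> powr p \<partial>M)"
    by (rule integral_mono_AE[OF i gi le2])
  thus "nrm f \<le> nrm g" unfolding nrm_def using int_nonneg p0 by (intro powr_mono2) auto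
qed

lemma nrm_cong_AE: assumes "AE x in M. f x = g x" "f \<in> borel_measurable M" "g \<in> borel_measurable M" shows "nrm f = nrm g"
proof -
  have m1: "(\<lambda>x. \<bar>f x\<bar> powr p) \<in> borel_measurable M" using assms(2) by measurable
  have m2: "(\<lambda>x. \<bar>g x\<bar> powr p) \<in> borel_measurable M" using assms(3) by measurable
  have e: "AE x in M. \<bar>f x\<bar> powr p = \<bar>g x\<bar> powr p" using assms(1) by (rule eventually_mono) simp
  show ?thesis unfolding nrm_def using integral_cong_AE[OF m1 m2 e] by simp
qed

lemma nrm_zero_AE: assumes "Lpf f" "nrm f = 0" shows "AE x in M. f x = 0"
proof -
  have "(\<integral>x. \<bar>f x\<bar> powr p \<partial>M) = 0" using assms(2) by (simp add: nrm_def)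
  hence "AE x in M. \<bar>f x\<bar> powr p = 0"
    using assms(1) unfolding Lpf_def by (subst integral_nonneg_eq_0_iff_AE[symmetric]) auto
  thus ?thesis by eventually_elim simp
qed

lemma Lpf_zero: "Lpf (\<lambda>x. 0)" using p0 by (simp add: Lpf_def)

lemma nrm_zero: "nrm (\<lambda>x. 0) = 0" using p0 by (simp add: nrm_def)

lemma nrm_uminus: "nrm (\<lambda>x. - f x) = nrm f" by (simp add: nrm_def)

lemma Lpf_uminus: "Lpf f \<Longrightarrow> Lpf (\<lambda>x. - f x)" by (simp add: Lpf_def)

lemma minkowski:
  assumes f: "Lpf f" and g: "Lpf g"
  shows "Lpf (\<lambda>x. f x + g x)" "nrm (\<lambda>x. f x + g x) \<le> nrm f + nrm g"
proof -
  have fm: "f \<in> borel_measurable M" and gm: "g \<in> borel_measurable M"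
    using f g by (auto simp: Lpf_def)
  have "Lpf (\<lambda>x. f x + g x) \<and> nrm (\<lambda>x. f x + g x) \<le> nrm f + nrm g"
  proof (cases "nrm f = 0 \<or> nrm g = 0")
    case True
    then show ?thesis
    proof
      assume n: "nrm f = 0"
      have "AE x in M. f x = 0" by (rule nrm_zero_AE[OF f n])
      hence "AE x in M. \<bar>f x + g x\<bar> \<le> \<bar>g x\<bar>" by eventually_elim simp
      moreover have "(\<lambda>x. f x + g x) \<in> borel_measurable M" using fm gm by simp
      ultimately show ?thesis using Lpf_mono[OF g, of "\<lambda>x. f x + g x"] n by simp
    next
      assume n: "nrm g = 0"
      have "AE x in M. g x = 0" by (rule nrm_zero_AE[OF g n])
      hence "AE x in M. \<bar>f x + g x\<bar> \<le> \<bar>f x\<bar>" by eventually_elim simp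
      moreover have "(\<lambda>x. f x + g x) \<in> borel_measurable M" using fm gm by simp
      ultimately show ?thesis using Lpf_mono[OF f, of "\<lambda>x. f x + g x"] n by simp
    qed
  next
    case False
    define a where "a = nrm f"
    define b where "b = nrm g"
    have a: "0 < a" and b: "0 < b" using False nrm_nonneg by (auto simp: a_def b_def less_le)
    define R where "R x = (a + b) powr (p - 1) * (a powr (1 - p) * \<bar>f x\<bar> powr p + b powr (1 - p) * \<bar>g x\<bar> powr p)" for x
    have Ri: "integrable M R" using f g unfolding R_def Lpf_def by auto
    have pt: "\<bar>f x + g x\<bar> powr p \<le> R x" for x
    proof -
      have "\<bar>f x + g x\<bar> powr p \<le> (\<bar>f x\<bar> + \<bar>g x\<bar>) powr p"
        using p0 by (intro powr_mono2) auto
      also have "\<dots> \<le> R x" unfolding R_def by (rule powr_sum_bound[OF p1 _ _ a b]) auto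
      finally show ?thesis .
    qed
    have R0: "0 \<le> R x" for x unfolding R_def by (intro mult_nonneg_nonneg add_nonneg_nonneg) auto
    have i: "integrable M (\<lambda>x. \<bar>f x + g x\<bar> powr p)"
      using fm gm pt R0 by (intro Bochner_Integration.integrable_bound[OF Ri]) auto
    have "(\<integral>x. \<bar>f x + g x\<bar> powr p \<partial>M) \<le> integral\<^sup>L M R"
      using pt by (intro integral_mono[OF i Ri])
    also have "integral\<^sup>L M R = (a + b) powr (p - 1) * (a powr (1 - p) * a powr p + b powr (1 - p) * b powr p)"
    proof -
      have fi: "integrable M (\<lambda>x. \<bar>f x\<bar> powr p)" and gi: "integrable M (\<lambda>x. \<bar>g x\<bar> powr p)"
        using f g by (auto simp: Lpf_def)
      have "integral\<^sup>L M R = (a + b) powr (p - 1) * (\<integral>x. a powr (1 - p) * \<bar>f x\<bar> powr p + b powr (1 - p) * \<bar>g x\<bar> powr p \<partial>M)"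
        unfolding R_def by (rule integral_mult_right_zero)
      also have "(\<integral>x. a powr (1 - p) * \<bar>f x\<bar> powr p + b powr (1 - p) * \<bar>g x\<bar> powr p \<partial>M)
          = a powr (1 - p) * (\<integral>x. \<bar>f x\<bar> powr p \<partial>M) + b powr (1 - p) * (\<integral>x. \<bar>g x\<bar> powr p \<partial>M)"
        using fi gi by (simp add: integral_add integral_mult_right_zero)
      finally show ?thesis by (simp only: a_def b_def nrm_pow)
    qed
    also have "\<dots> = (a + b) powr p"
    proof -
      have "a powr (1 - p) * a powr p = a" using a by (simp add: powr_add[symmetric])
      moreover have "b powr (1 - p) * b powr p = b" using b by (simp add: powr_add[symmetric])
      moreover have "(a + b) powr (p - 1) * (a + b) = (a + b) powr p"
        using a b powr_add[of "a+b" "p - 1" 1] by simp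
      ultimately show ?thesis by simp
    qed
    finally have "nrm (\<lambda>x. f x + g x) \<le> a + b" using a b by (subst nrm_le_iff) auto
    then show ?thesis using i fm gm by (simp add: Lpf_def a_def b_def)
  qed
  thus "Lpf (\<lambda>x. f x + g x)" "nrm (\<lambda>x. f x + g x) \<le> nrm f + nrm g" by auto
qed

lemma minkowski_diff:
  assumes f: "Lpf f" and g: "Lpf g"
  shows "Lpf (\<lambda>x. f x - g x)" "nrm (\<lambda>x. f x - g x) \<le> nrm f + nrm g"
proof -
  have "Lpf (\<lambda>x. f x + - g x)" "nrm (\<lambda>x. f x + - g x) \<le> nrm f + nrm (\<lambda>x. - g x)"
    by (rule minkowski[OF f Lpf_uminus[OF g]])+
  thus "Lpf (\<lambda>x. f x - g x)" "nrm (\<lambda>x. f x - g x) \<le> nrm f + nrm g"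
    by (simp_all only: diff_conv_add_uminus nrm_uminus)
qed

end


context LpS begin

abbreviation C where "C \<equiv> Lp_carrier M p"
abbreviation D where "D \<equiv> Lp_dist M p"

definition rep :: "('a \<Rightarrow> real) set \<Rightarrow> ('a \<Rightarrow> real)" where "rep U = (SOME f. f \<in> U)"

lemma mem_class: "g \<in> ae_class M f \<longleftrightarrow> g \<in> borel_measurable M \<and> (AE x in M. g x = f x)"
  by (simp add: ae_class_def)

lemma class_mem: "f \<in> borel_measurable M \<Longrightarrow> f \<in> ae_class M f"
  by (simp add: ae_class_def)

lemma class_C: "Lpf f \<Longrightarrow> ae_class M f \<in> C"
  unfolding Lp_carrier_def Lpf_def by blast

lemma C_elim: "U \<in> C \<Longrightarrow> \<exists>f. Lpf f \<and> U = ae_class M f"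
  unfolding Lp_carrier_def Lpf_def by blast

lemma rep_mem: assumes "U \<in> C" shows "rep U \<in> U"
proof -
  obtain f where f: "Lpf f" "U = ae_class M f" using C_elim[OF assms] by blast
  hence "f \<in> U" using class_mem by (simp add: Lpf_def)
  thus ?thesis unfolding rep_def by (metis someI)
qed

lemma Lpf_AE: assumes "Lpf f" "g \<in> borel_measurable M" "AE x in M. g x = f x" shows "Lpf g"
proof -
  have "AE x in M. \<bar>g x\<bar> \<le> \<bar>f x\<bar>" using assms(3) by (rule eventually_mono) simp
  thus ?thesis using Lpf_mono[OF assms(1) assms(2)] by blast
qed

lemma C_mem: assumes "U \<in> C" "g \<in> U" shows "Lpf g" "AE x in M. g x = rep U x" "g \<in> borel_measurable M"
proof -
  obtain f where f: "Lpf f" "U = ae_class M f" using C_elim[OF assms(1)] by blast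
  have r: "rep U \<in> borel_measurable M" "AE x in M. rep U x = f x"
    using rep_mem[OF assms(1)] f(2) mem_class by auto
  have g: "g \<in> borel_measurable M" "AE x in M. g x = f x" using assms(2) f(2) mem_class by auto
  show "Lpf g" using Lpf_AE[OF f(1) g] .
  show "AE x in M. g x = rep U x" using g(2) r(2) by eventually_elim simp
  show "g \<in> borel_measurable M" by (rule g(1))
qed

lemma rep_Lpf: "U \<in> C \<Longrightarrow> Lpf (rep U)"
  using C_mem(1) rep_mem by blast

lemma rep_meas: "U \<in> C \<Longrightarrow> rep U \<in> borel_measurable M"
  using rep_Lpf by (simp add: Lpf_def)

lemma C_eq: assumes "U \<in> C" shows "U = ae_class M (rep U)"
proof -
  obtain f where f: "Lpf f" "U = ae_class M f" using C_elim[OF assms] by blast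
  have r: "AE x in M. rep U x = f x"
    using rep_mem[OF assms] f(2) mem_class by auto
  show ?thesis
  proof (rule set_eqI)
    fix g
    have "g \<in> U \<longleftrightarrow> g \<in> borel_measurable M \<and> (AE x in M. g x = f x)"
      using f(2) mem_class by simp
    also have "\<dots> \<longleftrightarrow> g \<in> borel_measurable M \<and> (AE x in M. g x = rep U x)"
      using r by (auto elim: AE_mp)
    finally show "g \<in> U \<longleftrightarrow> g \<in> ae_class M (rep U)" using mem_class by simp
  qed
qed

lemma rep_class: assumes "Lpf f" shows "AE x in M. rep (ae_class M f) x = f x"
proof -
  have "f \<in> borel_measurable M" using assms by (simp add: Lpf_def)
  hence "rep (ae_class M f) \<in> ae_class M f" using rep_mem class_C[OF assms] by blast
  thus ?thesis by (simp add: mem_class)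
qed

lemma D_def': "D U V = nrm (\<lambda>x. rep U x - rep V x)"
  unfolding Lp_dist_def nrm_def rep_def Let_def by simp

lemma D_reps: assumes "U \<in> C" "V \<in> C" "f \<in> U" "g \<in> V" shows "D U V = nrm (\<lambda>x. f x - g x)"
proof -
  have "AE x in M. rep U x - rep V x = f x - g x"
    using C_mem(2)[OF assms(1,3)] C_mem(2)[OF assms(2,4)] by eventually_elim simp
  moreover have "(\<lambda>x. rep U x - rep V x) \<in> borel_measurable M"
    using rep_meas[OF assms(1)] rep_meas[OF assms(2)] by measurable
  moreover have "(\<lambda>x. f x - g x) \<in> borel_measurable M"
    using C_mem(3)[OF assms(1,3)] C_mem(3)[OF assms(2,4)] by measurable
  ultimately show ?thesis unfolding D_def' by (rule nrm_cong_AE)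
qed

lemma nrm_commute: "nrm (\<lambda>x. f x - g x) = nrm (\<lambda>x. g x - f x)"
  unfolding nrm_def by (simp add: abs_minus_commute)

lemma metric: "Metric_space C D"
proof
  fix U V show "0 \<le> D U V" unfolding D_def' by (rule nrm_nonneg)
  show "D U V = D V U" unfolding D_def' by (rule nrm_commute)
next
  fix U V assume U: "U \<in> C" and V: "V \<in> C"
  show "D U V = 0 \<longleftrightarrow> U = V"
  proof
    assume "D U V = 0"
    hence "AE x in M. rep U x - rep V x = 0"
      unfolding D_def' using minkowski_diff(1)[OF rep_Lpf[OF U] rep_Lpf[OF V]] nrm_zero_AE by blast
    hence e: "AE x in M. rep U x = rep V x" by (rule eventually_mono) simp
    show "U = V"
      apply (subst C_eq[OF U], subst C_eq[OF V])
      unfolding ae_class_def using e by (auto elim: AE_mp)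
  next
    assume "U = V" thus "D U V = 0" unfolding D_def' using nrm_zero by simp
  qed
next
  fix U V W assume U: "U \<in> C" and V: "V \<in> C" and W: "W \<in> C"
  have "nrm (\<lambda>x. (rep U x - rep V x) + (rep V x - rep W x)) \<le> nrm (\<lambda>x. rep U x - rep V x) + nrm (\<lambda>x. rep V x - rep W x)"
    by (rule minkowski(2)[OF minkowski_diff(1)[OF rep_Lpf[OF U] rep_Lpf[OF V]] minkowski_diff(1)[OF rep_Lpf[OF V] rep_Lpf[OF W]]])
  thus "D U W \<le> D U V + D V W" unfolding D_def' by simp
qed

end

sublocale LpS \<subseteq> LM: Metric_space C D by (rule metric)



lemma abs_le_pow_bound:
  fixes t e p :: real assumes p: "1 \<le> p" and e: "0 < e"
  shows "\<bar>t\<bar> \<le> e + e powr (1 - p) * \<bar>t\<bar> powr p"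
proof (cases "\<bar>t\<bar> \<le> e")
  case True
  then show ?thesis by (smt (verit) mult_nonneg_nonneg powr_ge_zero)
next
  case False
  hence t: "e < \<bar>t\<bar>" by simp
  have "\<bar>t\<bar> powr p = \<bar>t\<bar> * \<bar>t\<bar> powr (p - 1)" using t e by (simp add: powr_diff)
  moreover have "e powr (p - 1) \<le> \<bar>t\<bar> powr (p - 1)" using t e p by (intro powr_mono2) auto
  ultimately have "\<bar>t\<bar> * e powr (p - 1) \<le> \<bar>t\<bar> powr p" by (simp add: mult_left_mono)
  hence "e powr (1 - p) * (\<bar>t\<bar> * e powr (p - 1)) \<le> e powr (1 - p) * \<bar>t\<bar> powr p"
    by (intro mult_left_mono) auto
  moreover have "e powr (1 - p) * (\<bar>t\<bar> * e powr (p - 1)) = \<bar>t\<bar>"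
    using e by (simp add: powr_add[symmetric])
  ultimately show ?thesis using e by simp
qed

lemma abs_le_one_pow: fixes t p :: real assumes "1 \<le> p" shows "\<bar>t\<bar> \<le> 1 + \<bar>t\<bar> powr p"
  using abs_le_pow_bound[OF assms, of 1 t] by simp

context LpS begin

lemma nrm_le_pt:
  assumes g: "Lpf g" and f: "f \<in> borel_measurable M" and le: "\<And>x. x \<in> space M \<Longrightarrow> \<bar>f x\<bar> \<le> \<bar>g x\<bar>"
  shows "Lpf f" "nrm f \<le> nrm g"
  using Lpf_mono[OF g f] le by (auto intro: AE_I2)

lemma integrable_on_set:
  assumes w: "Lpf w" and S: "S \<in> sets M" "emeasure M S < \<infinity>"
  shows "integrable M (\<lambda>x. w x * indicator S x)"
proof -
  have wm: "w \<in> borel_measurable M" using w by (simp add: Lpf_def)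
  have Si: "integrable M (indicator S :: 'a \<Rightarrow> real)" using S by (simp add: integrable_indicator_iff)
  have bi: "integrable M (\<lambda>x. indicator S x + \<bar>w x\<bar> powr p)"
    using Si w by (simp add: Lpf_def)
  have m: "(\<lambda>x. w x * indicator S x) \<in> borel_measurable M" using wm S by measurable
  have "AE x in M. norm (w x * indicator S x) \<le> norm (indicator S x + \<bar>w x\<bar> powr p)"
  proof (rule AE_I2)
    fix x
    have "\<bar>w x\<bar> * indicator S x \<le> indicator S x + \<bar>w x\<bar> powr p"
      using abs_le_one_pow[OF p1, of "w x"] by (cases "x \<in> S") auto
    thus "norm (w x * indicator S x) \<le> norm (indicator S x + \<bar>w x\<bar> powr p)"
      by (simp add: abs_mult)
  qed
  thus ?thesis by (rule Bochner_Integration.integrable_bound[OF bi m])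
qed

lemma L1_bound:
  assumes w: "Lpf w" and S: "S \<in> sets M" "emeasure M S < \<infinity>"
  shows "(\<integral>x. \<bar>w x\<bar> * indicator S x \<partial>M) \<le> 2 * measure M S powr (1 - 1/p) * nrm w"
proof -
  have wm: "w \<in> borel_measurable M" using w by (simp add: Lpf_def)
  have awm: "(\<lambda>x. \<bar>w x\<bar>) \<in> borel_measurable M" using wm by measurable
  have aw: "Lpf (\<lambda>x. \<bar>w x\<bar>)" using w awm by (simp add: Lpf_def)
  have ii: "integrable M (\<lambda>x. \<bar>w x\<bar> * indicator S x)" by (rule integrable_on_set[OF aw S])
  have wi: "integrable M (\<lambda>x. \<bar>w x\<bar> powr p)" using w by (simp add: Lpf_def)
  have Si: "integrable M (indicator S :: 'a \<Rightarrow> real)" using S by (simp add: integrable_indicator_iff)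
  have I0: "0 \<le> (\<integral>x. \<bar>w x\<bar> * indicator S x \<partial>M)" by (intro integral_nonneg_AE) auto
  show ?thesis
  proof (cases "nrm w = 0 \<or> measure M S = 0")
    case True
    have "AE x in M. \<bar>w x\<bar> * indicator S x = 0"
      using True
    proof
      assume "nrm w = 0"
      hence "AE x in M. w x = 0" by (rule nrm_zero_AE[OF w])
      thus ?thesis by (rule eventually_mono) simp
    next
      assume "measure M S = 0"
      hence "emeasure M S = 0" using S(2) emeasure_eq_ennreal_measure[of M S] by simp
      hence "S \<in> null_sets M" using S by (simp add: null_sets_def)
      hence "AE x in M. x \<notin> S" by (rule AE_not_in)
      thus ?thesis by (rule eventually_mono) simp
    qed
    hence "(\<integral>x. \<bar>w x\<bar> * indicator S x \<partial>M) = 0"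
      using ii by (subst integral_nonneg_eq_0_iff_AE) auto
    thus ?thesis by (simp add: nrm_nonneg)
  next
    case False
    define N where "N = nrm w"
    define m where "m = measure M S"
    have N: "0 < N" using False nrm_nonneg by (auto simp: N_def less_le)
    have m: "0 < m" using False by (auto simp: m_def less_le)
    define e where "e = N / m powr (1/p)"
    have e: "0 < e" using N m by (simp add: e_def)
    have pt: "\<bar>w x\<bar> * indicator S x \<le> e * indicator S x + e powr (1 - p) * \<bar>w x\<bar> powr p" for x
      using abs_le_pow_bound[OF p1 e, of "w x"] e by (cases "x \<in> S") auto
    have "(\<integral>x. \<bar>w x\<bar> * indicator S x \<partial>M) \<le> (\<integral>x. e * indicator S x + e powr (1 - p) * \<bar>w x\<bar> powr p \<partial>M)"
      using ii Si wi pt by (intro integral_mono) auto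
    also have "\<dots> = e * m + e powr (1 - p) * N powr p"
      using Si wi S(1) by (simp add: m_def N_def nrm_pow Int_absorb2 sets.sets_into_space)
    also have "e * m = N * m powr (1 - 1/p)"
      using m by (simp add: e_def powr_diff)
    also have "e powr (1 - p) * N powr p = N * m powr (1 - 1/p)"
    proof -
      have "e powr (1 - p) = N powr (1 - p) * (m powr (1/p)) powr (p - 1)"
        using N m unfolding e_def by (simp add: powr_divide powr_minus_divide[symmetric] powr_diff)
      also have "(m powr (1/p)) powr (p - 1) = m powr (1 - 1/p)"
        using p0 by (simp add: powr_powr diff_divide_distrib)
      finally have "e powr (1 - p) * N powr p = m powr (1 - 1/p) * (N powr (1 - p) * N powr p)" by simp
      also have "N powr (1 - p) * N powr p = N" using N by (simp add: powr_add[symmetric])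
      finally show ?thesis by simp
    qed
    finally show ?thesis by (simp add: N_def m_def mult_ac)
  qed
qed

lemma set_int_diff_bound:
  assumes f: "Lpf f" and g: "Lpf g" and S: "S \<in> sets M" "emeasure M S < \<infinity>"
  shows "\<bar>(\<integral>x. f x * indicator S x \<partial>M) - (\<integral>x. g x * indicator S x \<partial>M)\<bar>
          \<le> 2 * measure M S powr (1 - 1/p) * nrm (\<lambda>x. f x - g x)"
proof -
  have fg: "Lpf (\<lambda>x. f x - g x)" by (rule minkowski_diff(1)[OF f g])
  have i1: "integrable M (\<lambda>x. f x * indicator S x)" by (rule integrable_on_set[OF f S])
  have i2: "integrable M (\<lambda>x. g x * indicator S x)" by (rule integrable_on_set[OF g S])
  have "(\<integral>x. f x * indicator S x \<partial>M) - (\<integral>x. g x * indicator S x \<partial>M) = (\<integral>x. (f x - g x) * indicator S x \<partial>M)"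
    using i1 i2 by (simp add: left_diff_distrib)
  also have "\<bar>\<dots>\<bar> \<le> (\<integral>x. \<bar>(f x - g x) * indicator S x\<bar> \<partial>M)" by (rule integral_abs_bound)
  also have "\<dots> = (\<integral>x. \<bar>f x - g x\<bar> * indicator S x \<partial>M)" by (simp add: abs_mult)
  also have "\<dots> \<le> 2 * measure M S powr (1 - 1/p) * nrm (\<lambda>x. f x - g x)" by (rule L1_bound[OF fg S])
  finally show ?thesis .
qed

lemma Lpf_ind:
  assumes S: "S \<in> sets M" "emeasure M S < \<infinity>"
  shows "Lpf (\<lambda>x. c * indicator S x)" "nrm (\<lambda>x. c * indicator S x) = \<bar>c\<bar> * measure M S powr (1/p)"
proof -
  have e: "\<bar>c * indicator S x\<bar> powr p = \<bar>c\<bar> powr p * indicator S x" for x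
    using p0 by (cases "x \<in> S") (auto simp: abs_mult)
  have Si: "integrable M (indicator S :: 'a \<Rightarrow> real)" using S by (simp add: integrable_indicator_iff)
  show "Lpf (\<lambda>x. c * indicator S x)" unfolding Lpf_def e using Si S by auto
  have "nrm (\<lambda>x. c * indicator S x) = (\<bar>c\<bar> powr p * measure M S) powr (1/p)"
    unfolding nrm_def e using Si S(1) by (simp add: Int_absorb2 sets.sets_into_space)
  also have "\<dots> = \<bar>c\<bar> * measure M S powr (1/p)"
    using p0 by (simp add: powr_mult powr_powr)
  finally show "nrm (\<lambda>x. c * indicator S x) = \<bar>c\<bar> * measure M S powr (1/p)" .
qed

end


context LpS begin

lemma nrm_scale: "nrm (\<lambda>x. c * f x) = \<bar>c\<bar> * nrm f"
proof -
  have e: "\<bar>c * f x\<bar> powr p = \<bar>c\<bar> powr p * \<bar>f x\<bar> powr p" for x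
    by (simp add: abs_mult powr_mult)
  have "nrm (\<lambda>x. c * f x) = (\<bar>c\<bar> powr p * (\<integral>x. \<bar>f x\<bar> powr p \<partial>M)) powr (1/p)"
    unfolding nrm_def e by simp
  also have "\<dots> = (\<bar>c\<bar> powr p) powr (1/p) * nrm f"
    unfolding nrm_def using int_nonneg[of f] by (simp add: powr_mult)
  also have "(\<bar>c\<bar> powr p) powr (1/p) = \<bar>c\<bar>" using p0 by (simp add: powr_powr)
  finally show ?thesis .
qed

lemma Lpf_scale: "Lpf f \<Longrightarrow> Lpf (\<lambda>x. c * f x)"
proof -
  assume f: "Lpf f"
  have e: "\<bar>c * f x\<bar> powr p = \<bar>c\<bar> powr p * \<bar>f x\<bar> powr p" for x
    by (simp add: abs_mult powr_mult)
  have fm: "f \<in> borel_measurable M" using f by (simp add: Lpf_def)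
  have "(\<lambda>x. c * f x) \<in> borel_measurable M" using fm by measurable
  thus ?thesis using f unfolding Lpf_def e by simp
qed

lemma nrm_rev_triangle:
  assumes f: "Lpf f" and g: "Lpf g"
  shows "\<bar>nrm f - nrm g\<bar> \<le> nrm (\<lambda>x. f x - g x)"
proof -
  have fg: "Lpf (\<lambda>x. f x - g x)" by (rule minkowski_diff(1)[OF f g])
  have gf: "Lpf (\<lambda>x. g x - f x)" by (rule minkowski_diff(1)[OF g f])
  have "nrm f \<le> nrm (\<lambda>x. f x - g x) + nrm g"
    using minkowski(2)[OF fg g] by simp
  moreover have "nrm g \<le> nrm (\<lambda>x. g x - f x) + nrm f"
    using minkowski(2)[OF gf f] by simp
  ultimately show ?thesis using nrm_commute[of f g] by linarith
qed

end

definition avg :: "'a measure \<Rightarrow> 'a set \<Rightarrow> ('a \<Rightarrow> real) \<Rightarrow> real" where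
  "avg M S f = (\<integral>x. f x * indicator S x \<partial>M) / measure M S"

locale ZS = LpS M p for M :: "'a measure" and p +
  fixes B :: "'a set" and P :: "nat \<Rightarrow> 'a set"
  assumes B: "B \<in> sets M" "emeasure M B < \<infinity>"
  and Ps: "\<And>k. P k \<in> sets M" and PB: "\<And>k. P k \<subseteq> B" and Ppos: "\<And>k. 0 < emeasure M (P k)"
  and Pdisj: "disjoint_family P"
begin

definition A where
  "A = {U \<in> C. \<forall>S1 S2. S1 \<in> sets M \<longrightarrow> S2 \<in> sets M \<longrightarrow> S1 \<subseteq> B \<longrightarrow> S2 \<subseteq> B \<longrightarrow>
        0 < measure M S1 \<longrightarrow> 0 < measure M S2 \<longrightarrow> \<bar>avg M S1 (rep U) - avg M S2 (rep U)\<bar> \<le> 1}"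

lemma fin_sub: "S \<subseteq> B \<Longrightarrow> S \<in> sets M \<Longrightarrow> emeasure M S < \<infinity>"
  using B emeasure_mono[of S B M] by (meson le_less_trans)

definition kap :: "'a set \<Rightarrow> real" where "kap S = 2 * measure M S powr (1 - 1/p) / measure M S"

lemma kap_nonneg: "0 \<le> kap S" by (simp add: kap_def)

lemma avg_lip:
  assumes S: "S \<in> sets M" "S \<subseteq> B" and f: "Lpf f" and g: "Lpf g"
  shows "\<bar>avg M S f - avg M S g\<bar> \<le> kap S * nrm (\<lambda>x. f x - g x)"
proof -
  have Sf: "emeasure M S < \<infinity>" by (rule fin_sub[OF S(2) S(1)])
  have "\<bar>avg M S f - avg M S g\<bar> = \<bar>(\<integral>x. f x * indicator S x \<partial>M) - (\<integral>x. g x * indicator S x \<partial>M)\<bar> / measure M S"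
    unfolding avg_def by (simp add: diff_divide_distrib[symmetric])
  also have "\<dots> \<le> 2 * measure M S powr (1 - 1/p) * nrm (\<lambda>x. f x - g x) / measure M S"
    by (intro divide_right_mono set_int_diff_bound[OF f g S(1) Sf]) auto
  finally show ?thesis by (simp add: kap_def)
qed

lemma avg_lipC:
  assumes S: "S \<in> sets M" "S \<subseteq> B" and U: "U \<in> C" and V: "V \<in> C"
  shows "\<bar>avg M S (rep U) - avg M S (rep V)\<bar> \<le> kap S * D U V"
  using avg_lip[OF S rep_Lpf[OF U] rep_Lpf[OF V]] by (simp add: D_def')

lemma A_closed: "closedin LM.mtopology A"
  unfolding LM.closedin_metric
proof safe
  show "\<And>x. x \<in> A \<Longrightarrow> x \<in> C" by (simp add: A_def)
next
  fix U assume U: "U \<in> C" and nA: "U \<notin> A"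
  then obtain S1 S2 where S: "S1 \<in> sets M" "S2 \<in> sets M" "S1 \<subseteq> B" "S2 \<subseteq> B"
    "0 < measure M S1" "0 < measure M S2" and gt: "\<bar>avg M S1 (rep U) - avg M S2 (rep U)\<bar> > 1"
    unfolding A_def by auto
  define c where "c = kap S1 + kap S2 + 1"
  have c: "0 < c" using kap_nonneg[of S1] kap_nonneg[of S2] by (simp add: c_def)
  define r where "r = (\<bar>avg M S1 (rep U) - avg M S2 (rep U)\<bar> - 1) / c"
  have r: "0 < r" using gt c by (simp add: r_def)
  show "\<exists>r>0. disjnt A (LM.mball U r)"
  proof (intro exI conjI)
    show "0 < r" by (rule r)
    show "disjnt A (LM.mball U r)"
      unfolding disjnt_def
    proof (rule equals0I)
      fix V assume V: "V \<in> A \<inter> LM.mball U r"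
      hence VC: "V \<in> C" and dUV: "D U V < r" by (auto simp: A_def)
      have le1: "\<bar>avg M S1 (rep V) - avg M S2 (rep V)\<bar> \<le> 1" using V S by (auto simp: A_def)
      have b1: "\<bar>avg M S1 (rep U) - avg M S1 (rep V)\<bar> \<le> kap S1 * D U V" by (rule avg_lipC[OF S(1,3) U VC])
      have b2: "\<bar>avg M S2 (rep U) - avg M S2 (rep V)\<bar> \<le> kap S2 * D U V" by (rule avg_lipC[OF S(2,4) U VC])
      have "(kap S1 + kap S2) * D U V \<le> (kap S1 + kap S2) * r"
        using dUV kap_nonneg[of S1] kap_nonneg[of S2] by (intro mult_left_mono) auto
      also have "\<dots> < c * r" using r by (simp add: c_def)
      also have "c * r = \<bar>avg M S1 (rep U) - avg M S2 (rep U)\<bar> - 1" using c by (simp add: r_def)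
      finally show False using b1 b2 le1 by (simp add: algebra_simps)
    qed
  qed
qed

end


context ZS begin

definition Q where "Q k = P (Suc k)"
definition W where "W = (\<Union>k. Q k)"
definition R where "R k = (\<Union>j\<in>{k..}. Q j)"

lemma Qs: "Q k \<in> sets M" by (simp add: Q_def Ps)
lemma Ws: "W \<in> sets M" unfolding W_def using Qs by blast
lemma Rs: "R k \<in> sets M" unfolding R_def using Qs by blast
lemma QB: "Q k \<subseteq> B" by (simp add: Q_def PB)
lemma WB: "W \<subseteq> B" unfolding W_def using QB by blast
lemma RW: "R k \<subseteq> W" unfolding R_def W_def by blast
lemma Wfin: "emeasure M W < \<infinity>" by (rule fin_sub[OF WB Ws])
lemma Q_disj: "x \<in> Q j \<Longrightarrow> x \<in> Q k \<Longrightarrow> j = k"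
  using Pdisj unfolding Q_def disjoint_family_on_def by blast
lemma P0W: "x \<in> P 0 \<Longrightarrow> x \<notin> W"
  using Pdisj unfolding W_def Q_def disjoint_family_on_def by blast
lemma R_ev: "\<exists>N. \<forall>k\<ge>N. x \<notin> R k"
proof (cases "\<exists>j. x \<in> Q j")
  case True
  then obtain j where j: "x \<in> Q j" by blast
  show ?thesis
  proof (intro exI allI impI)
    fix k assume "Suc j \<le> k"
    thus "x \<notin> R k" using Q_disj[OF j] unfolding R_def by force
  qed
next
  case False
  thus ?thesis unfolding R_def by blast
qed

lemma meas_pos: assumes "S \<in> sets M" "S \<subseteq> B" "0 < emeasure M S" shows "0 < measure M S"
proof -
  have "emeasure M S < \<infinity>" using fin_sub assms by blast
  hence "emeasure M S = ennreal (measure M S)" using emeasure_eq_ennreal_measure[of M S] by simp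
  thus ?thesis using assms(3) by (simp add: ennreal_less_zero_iff)
qed

lemma Pmeas: "0 < measure M (P k)" using meas_pos[OF Ps PB Ppos] .
lemma Qmeas: "0 < measure M (Q k)" by (simp add: Q_def Pmeas)

end

locale ZC = ZS M p B P for M :: "'a measure" and p B P +
  fixes Uc :: "('a \<Rightarrow> real) set set set"
  assumes opn: "\<And>V. V \<in> Uc \<Longrightarrow> openin LM.mtopology V" and cov: "\<Union>Uc = C"
begin

definition dset where "dset u = {r. 0 < r \<and> r \<le> 1 \<and> (\<exists>V\<in>Uc. LM.mball u r \<subseteq> V)}"
definition dl where "dl u = Sup (dset u)"

lemma dset_bdd: "bdd_above (dset u)" unfolding dset_def bdd_above_def by auto

lemma dset_ne: assumes u: "u \<in> C" shows "\<exists>r\<in>dset u. 0 < r"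
proof -
  obtain V where V: "V \<in> Uc" "u \<in> V" using u cov by blast
  then obtain r where r: "0 < r" "LM.mball u r \<subseteq> V" using opn[OF V(1)] LM.openin_mtopology by blast
  have "min r 1 \<in> dset u" unfolding dset_def using r V LM.mball_subset_concentric[of "min r 1" r u]
    by auto
  thus ?thesis using r by (intro bexI[of _ "min r 1"]) auto
qed

lemma dl_pos: "u \<in> C \<Longrightarrow> 0 < dl u"
  using dset_ne dset_bdd unfolding dl_def by (meson cSup_upper less_le_trans)

lemma dl_le1: assumes u: "u \<in> C" shows "dl u \<le> 1"
proof -
  have "dset u \<noteq> {}" using dset_ne[OF u] by blast
  thus ?thesis unfolding dl_def by (intro cSup_least) (auto simp: dset_def)
qed

lemma dl_ball: assumes u: "u \<in> C" shows "\<exists>V\<in>Uc. LM.mball u (dl u / 2) \<subseteq> V"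
proof -
  have "dl u / 2 < Sup (dset u)" using dl_pos[OF u] by (simp add: dl_def)
  then obtain r where r: "r \<in> dset u" "dl u / 2 < r"
    using dset_ne[OF u] by (metis less_cSupE empty_iff)
  then obtain V where "V \<in> Uc" "LM.mball u r \<subseteq> V" by (auto simp: dset_def)
  thus ?thesis using r LM.mball_subset_concentric[of "dl u / 2" r u] by auto
qed

lemma dl_lip: assumes u: "u \<in> C" and v: "v \<in> C" shows "dl v \<le> dl u + D u v"
proof (rule ccontr)
  assume "\<not> dl v \<le> dl u + D u v"
  hence lt: "dl u + D u v < Sup (dset v)" by (simp add: dl_def)
  then obtain r where r: "r \<in> dset v" "dl u + D u v < r"
    using dset_ne[OF v] by (metis less_cSupE empty_iff)
  then obtain V where V: "V \<in> Uc" "LM.mball v r \<subseteq> V" and r1: "r \<le> 1" by (auto simp: dset_def)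
  have Dn: "0 \<le> D u v" by simp
  have "r - D u v \<in> dset u"
    unfolding dset_def
  proof (intro CollectI conjI bexI)
    show "0 < r - D u v" using r dl_pos[OF u] by simp
    show "r - D u v \<le> 1" using r1 Dn by linarith
    show "V \<in> Uc" by (rule V(1))
    show "LM.mball u (r - D u v) \<subseteq> V"
    proof
      fix w assume w: "w \<in> LM.mball u (r - D u v)"
      hence wC: "w \<in> C" and "D u w < r - D u v" by auto
      moreover have "D v w \<le> D v u + D u w" using LM.triangle[OF v u wC] .
      ultimately have "D v w < r" using LM.commute[of u v] by simp
      thus "w \<in> V" using V(2) v wC by auto
    qed
  qed
  hence "r - D u v \<le> dl u" unfolding dl_def using dset_bdd by (rule cSup_upper)
  thus False using r by simp
qed

lemma dl_lip2: assumes u: "u \<in> C" and v: "v \<in> C" shows "\<bar>dl u - dl v\<bar> \<le> D u v"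
  using dl_lip[OF u v] dl_lip[OF v u] LM.commute[of u v] by simp

end


context ZC begin

definition a where "a u = avg M (P 0) (rep u) + 2"
definition F where "F u x = (rep u x - a u) * indicator W x"
definition T where "T k u = nrm (\<lambda>x. F u x * indicator (R k) x)"
definition lam where "lam k u = max 0 (min 1 (2 - 4 * T k u / dl u))"
definition Lam where "Lam u x = (\<Sum>k. lam k u * indicator (Q k) x)"
definition H where "H u x = rep u x + Lam u x * (a u - rep u x)"
definition hmap where "hmap u = ae_class M (H u)"

lemma lam_01: "0 \<le> lam k u" "lam k u \<le> 1" by (auto simp: lam_def)

lemma Lam_Q: assumes x: "x \<in> Q k" shows "Lam u x = lam k u"
proof -
  have e: "lam j u * indicator (Q j) x = (if j = k then lam k u else 0)" for j
  proof (cases "j = k")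
    case True thus ?thesis using x by simp
  next
    case False hence "x \<notin> Q j" using Q_disj[OF _ x] by blast
    thus ?thesis using False by simp
  qed
  have "(\<lambda>j. lam j u * indicator (Q j) x) sums lam k u"
    unfolding e by (rule sums_single)
  thus ?thesis unfolding Lam_def by (rule sums_unique[symmetric])
qed

lemma Lam_nW: assumes x: "x \<notin> W" shows "Lam u x = 0"
proof -
  have "x \<notin> Q j" for j using x unfolding W_def by blast
  hence "(\<lambda>j. lam j u * indicator (Q j) x) = (\<lambda>j. 0)" by simp
  thus ?thesis unfolding Lam_def by simp
qed

lemma Lam_cases: "(\<exists>k. x \<in> Q k \<and> Lam u x = lam k u) \<or> (x \<notin> W \<and> Lam u x = 0)"
  using Lam_Q Lam_nW unfolding W_def by blast

lemma Lam_01: "0 \<le> Lam u x" "Lam u x \<le> 1"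
  using Lam_cases[of x u] lam_01 by auto

lemma Lam_meas: "Lam u \<in> borel_measurable M"
proof -
  have "\<And>k. (\<lambda>x. lam k u * indicator (Q k) x) \<in> borel_measurable M"
    using Qs by (intro borel_measurable_times borel_measurable_const borel_measurable_indicator)
  then show ?thesis unfolding Lam_def by (rule borel_measurable_suminf)
qed

lemma a_meas: True ..

lemma F_Lpf: assumes u: "u \<in> C" shows "Lpf (F u)"
proof -
  have rm: "rep u \<in> borel_measurable M" by (rule rep_meas[OF u])
  have m1: "(\<lambda>x. rep u x * indicator W x) \<in> borel_measurable M" using rm Ws by measurable
  have l1: "Lpf (\<lambda>x. rep u x * indicator W x)"
    by (rule nrm_le_pt(1)[OF rep_Lpf[OF u] m1]) (auto simp: indicator_def)
  have l2: "Lpf (\<lambda>x. a u * indicator W x)" by (rule Lpf_ind(1)[OF Ws Wfin])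
  have "Lpf (\<lambda>x. rep u x * indicator W x - a u * indicator W x)" by (rule minkowski_diff(1)[OF l1 l2])
  moreover have "(\<lambda>x. rep u x * indicator W x - a u * indicator W x) = F u"
    by (auto simp: F_def algebra_simps)
  ultimately show ?thesis by simp
qed

lemma F_meas: "u \<in> C \<Longrightarrow> F u \<in> borel_measurable M" using F_Lpf by (simp add: Lpf_def)

lemma FR_Lpf: assumes u: "u \<in> C" shows "Lpf (\<lambda>x. F u x * indicator (R k) x)" "T k u \<le> nrm (F u)"
proof -
  have m: "(\<lambda>x. F u x * indicator (R k) x) \<in> borel_measurable M" using F_meas[OF u] Rs by measurable
  show "Lpf (\<lambda>x. F u x * indicator (R k) x)" "T k u \<le> nrm (F u)"
    using nrm_le_pt[OF F_Lpf[OF u] m] unfolding T_def by (auto simp: indicator_def)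
qed

lemma H_meas: assumes u: "u \<in> C" shows "H u \<in> borel_measurable M"
  unfolding H_def using rep_meas[OF u] Lam_meas[of u] by measurable

lemma Lpf_abs: "Lpf f \<Longrightarrow> Lpf (\<lambda>x. \<bar>f x\<bar>)"
proof -
  assume f: "Lpf f"
  have fm: "f \<in> borel_measurable M" using f by (simp add: Lpf_def)
  have "(\<lambda>x. \<bar>f x\<bar>) \<in> borel_measurable M" using fm by measurable
  thus ?thesis using f by (simp add: Lpf_def)
qed

lemma H_Lpf: assumes u: "u \<in> C" shows "Lpf (H u)"
proof -
  have l: "Lpf (\<lambda>x. \<bar>rep u x\<bar> + \<bar>a u\<bar> * indicator W x)"
    by (rule minkowski(1)[OF Lpf_abs[OF rep_Lpf[OF u]] Lpf_ind(1)[OF Ws Wfin]])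
  have le: "\<bar>H u x\<bar> \<le> \<bar>\<bar>rep u x\<bar> + \<bar>a u\<bar> * indicator W x\<bar>" for x
  proof (cases "x \<in> W")
    case True
    have "\<bar>H u x\<bar> = \<bar>(1 - Lam u x) * rep u x + Lam u x * a u\<bar>" by (simp add: H_def algebra_simps)
    also have "\<dots> \<le> (1 - Lam u x) * \<bar>rep u x\<bar> + Lam u x * \<bar>a u\<bar>"
    proof -
      have "\<bar>(1 - Lam u x) * rep u x\<bar> = (1 - Lam u x) * \<bar>rep u x\<bar>" using Lam_01[of u x] by (simp add: abs_mult)
      moreover have "\<bar>Lam u x * a u\<bar> = Lam u x * \<bar>a u\<bar>" using Lam_01[of u x] by (simp add: abs_mult)
      ultimately show ?thesis using abs_triangle_ineq[of "(1 - Lam u x) * rep u x" "Lam u x * a u"] by simp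
    qed
    also have "\<dots> \<le> \<bar>rep u x\<bar> + \<bar>a u\<bar>"
    proof -
      have "(1 - Lam u x) * \<bar>rep u x\<bar> \<le> \<bar>rep u x\<bar>" using Lam_01[of u x] by (simp add: mult_left_le_one_le)
      moreover have "Lam u x * \<bar>a u\<bar> \<le> \<bar>a u\<bar>" using Lam_01[of u x] by (simp add: mult_left_le_one_le)
      ultimately show ?thesis by simp
    qed
    finally show ?thesis using True by simp
  next
    case False
    then show ?thesis by (simp add: H_def Lam_nW)
  qed
  show ?thesis by (rule nrm_le_pt(1)[OF l H_meas[OF u] le])
qed

lemma hmap_C: "u \<in> C \<Longrightarrow> hmap u \<in> C"
  unfolding hmap_def by (rule class_C[OF H_Lpf])

lemma H_in: "u \<in> C \<Longrightarrow> H u \<in> hmap u"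
  unfolding hmap_def by (rule class_mem[OF H_meas])

lemma rep_hmap: "u \<in> C \<Longrightarrow> AE x in M. rep (hmap u) x = H u x"
  unfolding hmap_def by (rule rep_class[OF H_Lpf])

end


context ZC begin

lemma T_small: assumes u: "u \<in> C" and e: "0 < e" shows "\<exists>k. T k u < e"
proof -
  define s where "s k x = \<bar>F u x * indicator (R k) x\<bar> powr p" for k x
  have Fm: "F u \<in> borel_measurable M" by (rule F_meas[OF u])
  have wi: "integrable M (\<lambda>x. \<bar>F u x\<bar> powr p)" using F_Lpf[OF u] by (simp add: Lpf_def)
  have sm: "s k \<in> borel_measurable M" for k unfolding s_def using Fm Rs by measurable
  have lim: "AE x in M. (\<lambda>k. s k x) \<longlonglongrightarrow> 0"
  proof (rule AE_I2)
    fix x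
    obtain N where N: "\<forall>k\<ge>N. x \<notin> R k" using R_ev by blast
    have "eventually (\<lambda>k. s k x = 0) sequentially"
      unfolding eventually_sequentially s_def using N p0 by (intro exI[of _ N]) auto
    thus "(\<lambda>k. s k x) \<longlonglongrightarrow> 0" by (rule tendsto_eventually)
  qed
  have bound: "AE x in M. norm (s k x) \<le> \<bar>F u x\<bar> powr p" for k
  proof (rule AE_I2)
    fix x show "norm (s k x) \<le> \<bar>F u x\<bar> powr p"
      unfolding s_def using p0 by (cases "x \<in> R k") auto
  qed
  have "(\<lambda>k. integral\<^sup>L M (s k)) \<longlonglongrightarrow> integral\<^sup>L M (\<lambda>x. 0::real)"
    by (rule integral_dominated_convergence[OF borel_measurable_const sm wi lim bound])
  hence "(\<lambda>k. integral\<^sup>L M (s k)) \<longlonglongrightarrow> 0" by simp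
  moreover have "0 < e powr p" using e by simp
  ultimately have "eventually (\<lambda>k. integral\<^sup>L M (s k) < e powr p) sequentially"
    by (rule order_tendstoD)
  hence "\<exists>N. \<forall>k\<ge>N. integral\<^sup>L M (s k) < e powr p" by (simp only: eventually_sequentially)
  then obtain N where N: "\<forall>k\<ge>N. integral\<^sup>L M (s k) < e powr p" by blast
  hence "integral\<^sup>L M (s N) < e powr p" by simp
  then obtain k where "integral\<^sup>L M (s k) < e powr p" by blast
  moreover have "integral\<^sup>L M (s k) = (\<integral>x. \<bar>F u x * indicator (R k) x\<bar> powr p \<partial>M)"
    unfolding s_def by (rule refl)
  ultimately have "T k u < e" unfolding T_def using e by (subst nrm_less_iff) simp_all
  thus ?thesis by blast
qed

lemma lam_one: assumes u: "u \<in> C" shows "\<exists>k. lam k u = 1"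
proof -
  obtain k where k: "T k u < dl u / 4" using T_small[OF u, of "dl u / 4"] dl_pos[OF u] by auto
  hence "4 * T k u / dl u \<le> 1" using dl_pos[OF u] by (simp add: field_simps)
  hence "lam k u = 1" by (simp add: lam_def)
  thus ?thesis by blast
qed

lemma D_small: assumes u: "u \<in> C" shows "D u (hmap u) < dl u / 2"
proof -
  have ex: "\<exists>k. T k u < dl u / 2" using T_small[OF u, of "dl u / 2"] dl_pos[OF u] by auto
  define K where "K = (LEAST k. T k u < dl u / 2)"
  have TK: "T K u < dl u / 2" unfolding K_def using ex by (rule LeastI_ex)
  have lam0: "lam j u = 0" if j: "j < K" for j
  proof -
    have "\<not> T j u < dl u / 2" using not_less_Least[OF j[unfolded K_def]] .
    hence "2 \<le> 4 * T j u / dl u" using dl_pos[OF u] by (simp add: field_simps)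
    thus ?thesis by (simp add: lam_def)
  qed
  have eq: "D u (hmap u) = nrm (\<lambda>x. rep u x - H u x)"
    by (rule D_reps[OF u hmap_C[OF u] rep_mem[OF u] H_in[OF u]])
  have m: "(\<lambda>x. rep u x - H u x) \<in> borel_measurable M" using rep_meas[OF u] H_meas[OF u] by measurable
  have pt: "\<bar>rep u x - H u x\<bar> \<le> \<bar>F u x * indicator (R K) x\<bar>" for x
  proof -
    have e1: "\<bar>rep u x - H u x\<bar> = Lam u x * \<bar>rep u x - a u\<bar>"
      using Lam_01[of u x] by (simp add: H_def abs_mult abs_minus_commute)
    show ?thesis
    proof (cases "\<exists>j. x \<in> Q j")
      case True
      then obtain j where j: "x \<in> Q j" by blast
      show ?thesis
      proof (cases "j < K")
        case True thus ?thesis using e1 Lam_Q[OF j] lam0 by simp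
      next
        case False
        hence xR: "x \<in> R K" using j unfolding R_def by auto
        hence xW: "x \<in> W" using RW by blast
        have "Lam u x * \<bar>rep u x - a u\<bar> \<le> \<bar>rep u x - a u\<bar>"
          using Lam_01[of u x] by (simp add: mult_left_le_one_le)
        thus ?thesis using e1 xR xW by (simp add: F_def)
      qed
    next
      case False
      hence "x \<notin> W" unfolding W_def by blast
      thus ?thesis using e1 Lam_nW by simp
    qed
  qed
  have "nrm (\<lambda>x. rep u x - H u x) \<le> T K u"
    unfolding T_def by (rule nrm_le_pt(2)[OF FR_Lpf(1)[OF u] m pt])
  thus ?thesis using eq TK by simp
qed

lemma int_ind_const: "S \<in> sets M \<Longrightarrow> S \<subseteq> B \<Longrightarrow> (\<integral>x. c * indicator S x \<partial>M) = c * measure M S"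
  using fin_sub by (simp add: less_top[symmetric])

lemma hmap_notA: assumes u: "u \<in> C" shows "hmap u \<notin> A"
proof
  assume hA: "hmap u \<in> A"
  obtain k where k: "lam k u = 1" using lam_one[OF u] by blast
  have hm: "rep (hmap u) \<in> borel_measurable M" by (rule rep_meas[OF hmap_C[OF u]])
  have avg_eq: "avg M S (rep (hmap u)) = avg M S (H u)" if S: "S \<in> sets M" for S
  proof -
    have "(\<integral>x. rep (hmap u) x * indicator S x \<partial>M) = (\<integral>x. H u x * indicator S x \<partial>M)"
    proof (rule integral_cong_AE)
      show "(\<lambda>x. rep (hmap u) x * indicator S x) \<in> borel_measurable M" using hm S by measurable
      show "(\<lambda>x. H u x * indicator S x) \<in> borel_measurable M" using H_meas[OF u] S by measurable
      show "AE x in M. rep (hmap u) x * indicator S x = H u x * indicator S x"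
        using rep_hmap[OF u] by (rule eventually_mono) simp
    qed
    thus ?thesis by (simp add: avg_def)
  qed
  have a1: "avg M (Q k) (H u) = a u"
  proof -
    have "(\<lambda>x. H u x * indicator (Q k) x) = (\<lambda>x. a u * indicator (Q k) x)"
    proof
      fix x show "H u x * indicator (Q k) x = a u * indicator (Q k) x"
        using Lam_Q[of x k u] k by (cases "x \<in> Q k") (auto simp: H_def)
    qed
    hence "(\<integral>x. H u x * indicator (Q k) x \<partial>M) = a u * measure M (Q k)"
      using int_ind_const[OF Qs QB] by simp
    thus ?thesis using Qmeas[of k] by (simp add: avg_def)
  qed
  have a2: "avg M (P 0) (H u) = a u - 2"
  proof -
    have "(\<lambda>x. H u x * indicator (P 0) x) = (\<lambda>x. rep u x * indicator (P 0) x)"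
    proof
      fix x show "H u x * indicator (P 0) x = rep u x * indicator (P 0) x"
        using Lam_nW[OF P0W, of x u] by (cases "x \<in> P 0") (auto simp: H_def)
    qed
    thus ?thesis by (simp add: avg_def a_def)
  qed
  have "\<bar>avg M (Q k) (rep (hmap u)) - avg M (P 0) (rep (hmap u))\<bar> \<le> 1"
    using hA Qs[of k] Ps[of 0] QB[of k] PB[of 0] Qmeas[of k] Pmeas[of 0] unfolding A_def by blast
  thus False using avg_eq[OF Qs] avg_eq[OF Ps] a1 a2 by simp
qed

end


lemma clamp_lip: "\<bar>max 0 (min 1 (2 - x)) - max 0 (min 1 (2 - y))\<bar> \<le> \<bar>x - y :: real\<bar>"
  by (simp add: max_def min_def abs_if) 

context ZC begin

definition mW where "mW = measure M W powr (1/p)"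
definition k2 where "k2 = kap (P 0)"

lemma mW_nonneg: "0 \<le> mW" by (simp add: mW_def)
lemma k2_nonneg: "0 \<le> k2" by (simp add: k2_def kap_nonneg)

lemma a_lip: "u \<in> C \<Longrightarrow> v \<in> C \<Longrightarrow> \<bar>a u - a v\<bar> \<le> k2 * D u v"
  using avg_lipC[OF Ps PB, of u v 0] by (simp add: a_def k2_def)

lemma nrm_abs: "nrm (\<lambda>x. \<bar>f x\<bar>) = nrm f" by (simp add: nrm_def)

lemma F_bound: assumes u: "u \<in> C" and v: "v \<in> C"
  shows "nrm (F v) \<le> nrm (rep u) + D u v + (\<bar>a u\<bar> + k2 * D u v) * mW"
proof -
  have gL: "Lpf (rep v)" by (rule rep_Lpf[OF v])
  have l1: "Lpf (\<lambda>x. \<bar>rep v x\<bar> + \<bar>a v\<bar> * indicator W x)"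
    by (rule minkowski(1)[OF Lpf_abs[OF gL] Lpf_ind(1)[OF Ws Wfin]])
  have "nrm (F v) \<le> nrm (\<lambda>x. \<bar>rep v x\<bar> + \<bar>a v\<bar> * indicator W x)"
  proof (rule nrm_le_pt(2)[OF l1 F_meas[OF v]])
    fix x show "\<bar>F v x\<bar> \<le> \<bar>\<bar>rep v x\<bar> + \<bar>a v\<bar> * indicator W x\<bar>"
      by (cases "x \<in> W") (auto simp: F_def)
  qed
  also have "\<dots> \<le> nrm (\<lambda>x. \<bar>rep v x\<bar>) + nrm (\<lambda>x. \<bar>a v\<bar> * indicator W x)"
    by (rule minkowski(2)[OF Lpf_abs[OF gL] Lpf_ind(1)[OF Ws Wfin]])
  also have "nrm (\<lambda>x. \<bar>a v\<bar> * indicator W x) = \<bar>a v\<bar> * mW"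
    using Lpf_ind(2)[OF Ws Wfin] by (simp add: mW_def)
  also have "nrm (\<lambda>x. \<bar>rep v x\<bar>) \<le> nrm (rep u) + D u v"
  proof -
    have "nrm (\<lambda>x. rep u x - (rep u x - rep v x)) \<le> nrm (rep u) + nrm (\<lambda>x. rep u x - rep v x)"
      by (rule minkowski_diff(2)[OF rep_Lpf[OF u] minkowski_diff(1)[OF rep_Lpf[OF u] gL]])
    thus ?thesis by (simp add: nrm_abs D_def')
  qed
  also have "\<bar>a v\<bar> \<le> \<bar>a u\<bar> + k2 * D u v" using a_lip[OF u v] by linarith
  hence "\<bar>a v\<bar> * mW \<le> (\<bar>a u\<bar> + k2 * D u v) * mW" using mW_nonneg by (rule mult_right_mono)
  finally show ?thesis by simp
qed

lemma T_lip: assumes u: "u \<in> C" and v: "v \<in> C"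
  shows "\<bar>T k u - T k v\<bar> \<le> (1 + k2 * mW) * D u v"
proof -
  have l1: "Lpf (\<lambda>x. F u x * indicator (R k) x)" by (rule FR_Lpf(1)[OF u])
  have l2: "Lpf (\<lambda>x. F v x * indicator (R k) x)" by (rule FR_Lpf(1)[OF v])
  have fg: "Lpf (\<lambda>x. rep u x - rep v x)" by (rule minkowski_diff(1)[OF rep_Lpf[OF u] rep_Lpf[OF v]])
  have l3: "Lpf (\<lambda>x. \<bar>rep u x - rep v x\<bar> + \<bar>a u - a v\<bar> * indicator W x)"
    by (rule minkowski(1)[OF Lpf_abs[OF fg] Lpf_ind(1)[OF Ws Wfin]])
  have m: "(\<lambda>x. F u x * indicator (R k) x - F v x * indicator (R k) x) \<in> borel_measurable M"
    using F_meas[OF u] F_meas[OF v] Rs by measurable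
  have "\<bar>T k u - T k v\<bar> \<le> nrm (\<lambda>x. F u x * indicator (R k) x - F v x * indicator (R k) x)"
    unfolding T_def by (rule nrm_rev_triangle[OF l1 l2])
  also have "\<dots> \<le> nrm (\<lambda>x. \<bar>rep u x - rep v x\<bar> + \<bar>a u - a v\<bar> * indicator W x)"
  proof (rule nrm_le_pt(2)[OF l3 m])
    fix x
    show "\<bar>F u x * indicator (R k) x - F v x * indicator (R k) x\<bar> \<le> \<bar>\<bar>rep u x - rep v x\<bar> + \<bar>a u - a v\<bar> * indicator W x\<bar>"
    proof (cases "x \<in> R k")
      case True
      hence xW: "x \<in> W" using RW by blast
      have "\<bar>F u x - F v x\<bar> = \<bar>(rep u x - rep v x) - (a u - a v)\<bar>" using xW by (simp add: F_def)
      also have "\<dots> \<le> \<bar>rep u x - rep v x\<bar> + \<bar>a u - a v\<bar>" by (rule abs_triangle_ineq4)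
      finally show ?thesis using True xW by simp
    next
      case False thus ?thesis by simp
    qed
  qed
  also have "\<dots> \<le> nrm (\<lambda>x. \<bar>rep u x - rep v x\<bar>) + nrm (\<lambda>x. \<bar>a u - a v\<bar> * indicator W x)"
    by (rule minkowski(2)[OF Lpf_abs[OF fg] Lpf_ind(1)[OF Ws Wfin]])
  also have "nrm (\<lambda>x. \<bar>a u - a v\<bar> * indicator W x) = \<bar>a u - a v\<bar> * mW"
    using Lpf_ind(2)[OF Ws Wfin] by (simp add: mW_def)
  also have "nrm (\<lambda>x. \<bar>rep u x - rep v x\<bar>) = D u v" by (simp add: nrm_abs D_def')
  also have "\<bar>a u - a v\<bar> * mW \<le> k2 * D u v * mW" using a_lip[OF u v] mW_nonneg by (rule mult_right_mono)
  finally show ?thesis by (simp add: algebra_simps)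
qed

end


lemma abs4: "\<bar>4 * (x + y)\<bar> \<le> 4 * (\<bar>x\<bar> + \<bar>y\<bar>)" for x y :: real
  by (simp add: abs_mult abs_triangle_ineq)

context ZC begin

definition Bu where "Bu u = nrm (rep u) + 1 + (\<bar>a u\<bar> + k2) * mW"
definition Lc where "Lc u = 4 * ((1 + k2 * mW) / dl u + 2 * Bu u / (dl u)^2)"

lemma Bu_nonneg: "0 \<le> Bu u" unfolding Bu_def using nrm_nonneg[of "rep u"] mW_nonneg k2_nonneg by simp

lemma F_bound1: assumes u: "u \<in> C" and v: "v \<in> C" and d1: "D u v \<le> 1"
  shows "nrm (F v) \<le> Bu u"
proof -
  have "(\<bar>a u\<bar> + k2 * D u v) * mW \<le> (\<bar>a u\<bar> + k2) * mW"
    using d1 k2_nonneg mW_nonneg mult_left_le[of "D u v" k2] by (intro mult_right_mono) auto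
  thus ?thesis using F_bound[OF u v] d1 unfolding Bu_def by linarith
qed

lemma lam_lip: assumes u: "u \<in> C" and v: "v \<in> C" and d1: "D u v \<le> 1" and d2: "D u v \<le> dl u / 2"
  shows "\<bar>lam k u - lam k v\<bar> \<le> Lc u * D u v"
proof -
  define du where "du = dl u"
  define dv where "dv = dl v"
  define Tu where "Tu = T k u"
  define Tv where "Tv = T k v"
  define \<delta> where "\<delta> = D u v"
  define cT where "cT = 1 + k2 * mW"
  have du: "0 < du" using dl_pos[OF u] by (simp add: du_def)
  have \<delta>0: "0 \<le> \<delta>" by (simp add: \<delta>_def)
  have dd: "\<bar>du - dv\<bar> \<le> \<delta>" using dl_lip2[OF u v] by (simp add: du_def dv_def \<delta>_def)
  have dv: "du / 2 \<le> dv" using dd d2 by (simp add: du_def \<delta>_def)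
  have dvp: "0 < dv" using dv du by simp
  have Tv0: "0 \<le> Tv" by (simp add: Tv_def T_def nrm_nonneg)
  have TvB: "Tv \<le> Bu u" using FR_Lpf(2)[OF v, of k] F_bound1[OF u v d1] by (simp add: Tv_def)
  have TT: "\<bar>Tu - Tv\<bar> \<le> cT * \<delta>" using T_lip[OF u v, of k] by (simp add: Tu_def Tv_def cT_def \<delta>_def)
  have "\<bar>lam k u - lam k v\<bar> \<le> \<bar>4 * Tu / du - 4 * Tv / dv\<bar>"
    unfolding lam_def Tu_def Tv_def du_def dv_def by (rule clamp_lip)
  also have "4 * Tu / du - 4 * Tv / dv = 4 * ((Tu - Tv) / du + Tv * (dv - du) / (du * dv))"
    using du dvp by (simp add: field_simps)
  also have "\<bar>\<dots>\<bar> \<le> 4 * (\<bar>Tu - Tv\<bar> / du + Tv * \<bar>dv - du\<bar> / (du * dv))"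
  proof -
    have "\<bar>4 * ((Tu - Tv) / du + Tv * (dv - du) / (du * dv))\<bar> \<le> 4 * (\<bar>(Tu - Tv) / du\<bar> + \<bar>Tv * (dv - du) / (du * dv)\<bar>)"
      by (rule abs4)
    also have "\<bar>(Tu - Tv) / du\<bar> = \<bar>Tu - Tv\<bar> / du" using du by (simp add: abs_divide)
    also have "\<bar>Tv * (dv - du) / (du * dv)\<bar> = Tv * \<bar>dv - du\<bar> / (du * dv)"
      using du dvp Tv0 by (simp add: abs_divide abs_mult)
    finally show ?thesis .
  qed
  also have "\<dots> \<le> 4 * (cT * \<delta> / du + Bu u * \<delta> / (du * (du / 2)))"
  proof -
    have 1: "\<bar>Tu - Tv\<bar> / du \<le> cT * \<delta> / du" using TT du by (simp add: divide_right_mono)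
    have "Tv * \<bar>dv - du\<bar> \<le> Bu u * \<delta>"
    proof -
      have "\<bar>dv - du\<bar> \<le> \<delta>" using dd by (simp add: abs_minus_commute)
      thus ?thesis using TvB Bu_nonneg[of u] by (intro mult_mono) auto
    qed
    moreover have "du * (du / 2) \<le> du * dv" using dv du by simp
    ultimately have 2: "Tv * \<bar>dv - du\<bar> / (du * dv) \<le> Bu u * \<delta> / (du * (du / 2))"
      using du dvp Tv0 Bu_nonneg[of u] \<delta>0
      by (intro frac_le) (auto intro: mult_nonneg_nonneg)
    show ?thesis using 1 2 by simp
  qed
  also have "\<dots> = Lc u * D u v"
    unfolding Lc_def du_def[symmetric] cT_def[symmetric] \<delta>_def[symmetric] using du
    by (simp add: field_simps power2_eq_square)
  finally show ?thesis .
qed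

lemma Lam_lip: assumes u: "u \<in> C" and v: "v \<in> C" and d1: "D u v \<le> 1" and d2: "D u v \<le> dl u / 2"
  shows "\<bar>Lam u x - Lam v x\<bar> \<le> Lc u * D u v"
proof (cases "\<exists>k. x \<in> Q k")
  case True
  then obtain k where k: "x \<in> Q k" by blast
  show ?thesis using Lam_Q[OF k, of u] Lam_Q[OF k, of v] lam_lip[OF u v d1 d2] by simp
next
  case False
  hence "x \<notin> W" unfolding W_def by blast
  thus ?thesis using Lam_nW[of x u] Lam_nW[of x v] lam_lip[OF u v d1 d2, of 0] by simp
qed

end


lemma abs3_bound: fixes l e c m w :: real assumes "0 \<le> l" "l \<le> 1"
  shows "\<bar>(1 - l) * e + l * c + m * w\<bar> \<le> \<bar>e\<bar> + \<bar>c\<bar> + \<bar>m\<bar> * \<bar>w\<bar>"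
proof -
  have "\<bar>(1 - l) * e\<bar> \<le> \<bar>e\<bar>" using assms by (simp add: abs_mult mult_left_le_one_le)
  moreover have "\<bar>l * c\<bar> \<le> \<bar>c\<bar>" using assms by (simp add: abs_mult mult_left_le_one_le)
  moreover have "\<bar>m * w\<bar> = \<bar>m\<bar> * \<bar>w\<bar>" by (simp add: abs_mult)
  ultimately show ?thesis by (smt (verit))
qed

context ZC begin

lemma Lc_nonneg: "u \<in> C \<Longrightarrow> 0 \<le> Lc u"
  unfolding Lc_def using dl_pos[of u] Bu_nonneg[of u] k2_nonneg mW_nonneg by simp

lemma H_diff_bound: assumes u: "u \<in> C" and v: "v \<in> C" and d1: "D u v \<le> 1" and d2: "D u v \<le> dl u / 2"
  shows "\<bar>H u x - H v x\<bar> \<le> \<bar>rep u x - rep v x\<bar> + \<bar>a u - a v\<bar> * indicator W x + (Lc u * D u v) * \<bar>F v x\<bar>"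
proof (cases "x \<in> W")
  case True
  have e: "H u x - H v x = (1 - Lam u x) * (rep u x - rep v x) + Lam u x * (a u - a v) + (Lam u x - Lam v x) * (a v - rep v x)"
    by (simp add: H_def algebra_simps)
  have "\<bar>H u x - H v x\<bar> \<le> \<bar>rep u x - rep v x\<bar> + \<bar>a u - a v\<bar> + \<bar>Lam u x - Lam v x\<bar> * \<bar>a v - rep v x\<bar>"
    unfolding e by (rule abs3_bound[OF Lam_01])
  also have "\<bar>Lam u x - Lam v x\<bar> * \<bar>a v - rep v x\<bar> \<le> (Lc u * D u v) * \<bar>a v - rep v x\<bar>"
    by (rule mult_right_mono[OF Lam_lip[OF u v d1 d2]]) simp
  also have "\<bar>a v - rep v x\<bar> = \<bar>F v x\<bar>" using True by (simp add: F_def abs_minus_commute)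
  finally show ?thesis using True by simp
next
  case False
  have "0 \<le> (Lc u * D u v) * \<bar>F v x\<bar>" using Lc_nonneg[OF u] by simp
  thus ?thesis using False Lam_nW[OF False, of u] Lam_nW[OF False, of v] by (simp add: H_def)
qed

lemma hmap_lip: assumes u: "u \<in> C" and v: "v \<in> C" and d1: "D u v \<le> 1" and d2: "D u v \<le> dl u / 2"
  shows "D (hmap u) (hmap v) \<le> (1 + k2 * mW + Lc u * Bu u) * D u v"
proof -
  define c where "c = Lc u * D u v"
  have c0: "0 \<le> c" using Lc_nonneg[OF u] by (simp add: c_def)
  have fg: "Lpf (\<lambda>x. rep u x - rep v x)" by (rule minkowski_diff(1)[OF rep_Lpf[OF u] rep_Lpf[OF v]])
  have l1: "Lpf (\<lambda>x. \<bar>rep u x - rep v x\<bar>)" by (rule Lpf_abs[OF fg])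
  have l2: "Lpf (\<lambda>x. \<bar>a u - a v\<bar> * indicator W x)" by (rule Lpf_ind(1)[OF Ws Wfin])
  have l3: "Lpf (\<lambda>x. c * \<bar>F v x\<bar>)" by (rule Lpf_scale[OF Lpf_abs[OF F_Lpf[OF v]]])
  have l12: "Lpf (\<lambda>x. \<bar>rep u x - rep v x\<bar> + \<bar>a u - a v\<bar> * indicator W x)" by (rule minkowski(1)[OF l1 l2])
  have l123: "Lpf (\<lambda>x. (\<bar>rep u x - rep v x\<bar> + \<bar>a u - a v\<bar> * indicator W x) + c * \<bar>F v x\<bar>)"
    by (rule minkowski(1)[OF l12 l3])
  have m: "(\<lambda>x. H u x - H v x) \<in> borel_measurable M" using H_meas[OF u] H_meas[OF v] by measurable
  have "D (hmap u) (hmap v) = nrm (\<lambda>x. H u x - H v x)"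
    by (rule D_reps[OF hmap_C[OF u] hmap_C[OF v] H_in[OF u] H_in[OF v]])
  also have "\<dots> \<le> nrm (\<lambda>x. (\<bar>rep u x - rep v x\<bar> + \<bar>a u - a v\<bar> * indicator W x) + c * \<bar>F v x\<bar>)"
  proof (rule nrm_le_pt(2)[OF l123 m])
    fix x
    have "\<bar>H u x - H v x\<bar> \<le> \<bar>rep u x - rep v x\<bar> + \<bar>a u - a v\<bar> * indicator W x + c * \<bar>F v x\<bar>"
      unfolding c_def by (rule H_diff_bound[OF u v d1 d2])
    thus "\<bar>H u x - H v x\<bar> \<le> \<bar>(\<bar>rep u x - rep v x\<bar> + \<bar>a u - a v\<bar> * indicator W x) + c * \<bar>F v x\<bar>\<bar>"
      by linarith
  qed
  also have "\<dots> \<le> nrm (\<lambda>x. \<bar>rep u x - rep v x\<bar> + \<bar>a u - a v\<bar> * indicator W x) + nrm (\<lambda>x. c * \<bar>F v x\<bar>)"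
    by (rule minkowski(2)[OF l12 l3])
  also have "\<dots> \<le> (nrm (\<lambda>x. \<bar>rep u x - rep v x\<bar>) + nrm (\<lambda>x. \<bar>a u - a v\<bar> * indicator W x)) + nrm (\<lambda>x. c * \<bar>F v x\<bar>)"
    using minkowski(2)[OF l1 l2] by simp
  also have "nrm (\<lambda>x. \<bar>rep u x - rep v x\<bar>) = D u v" by (simp add: nrm_abs D_def')
  also have "nrm (\<lambda>x. \<bar>a u - a v\<bar> * indicator W x) = \<bar>a u - a v\<bar> * mW"
    using Lpf_ind(2)[OF Ws Wfin] by (simp add: mW_def)
  also have "nrm (\<lambda>x. c * \<bar>F v x\<bar>) = c * nrm (F v)" using c0 by (simp add: nrm_scale nrm_abs)
  also have "\<bar>a u - a v\<bar> * mW \<le> k2 * D u v * mW" using a_lip[OF u v] mW_nonneg by (rule mult_right_mono)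
  also have "c * nrm (F v) \<le> c * Bu u" using F_bound1[OF u v d1] c0 by (rule mult_left_mono)
  finally show ?thesis by (simp add: c_def algebra_simps)
qed

lemma hmap_cont: "continuous_map LM.mtopology LM.mtopology hmap"
  unfolding LM.metric_continuous_map[OF metric]
proof (intro conjI ballI allI impI)
  show "hmap ` C \<subseteq> C" using hmap_C by blast
next
  fix u and e :: real assume u: "u \<in> C" and e: "0 < e"
  define K where "K = 1 + k2 * mW + Lc u * Bu u"
  have "0 \<le> k2 * mW" using k2_nonneg mW_nonneg by simp
  moreover have "0 \<le> Lc u * Bu u" using Lc_nonneg[OF u] Bu_nonneg[of u] by simp
  ultimately have K: "0 < K" by (simp add: K_def)
  define r where "r = min (min 1 (dl u / 2)) (e / (2 * K))"
  have r: "0 < r" using dl_pos[OF u] K e by (simp add: r_def)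
  show "\<exists>r>0. \<forall>v. v \<in> C \<and> D u v < r \<longrightarrow> D (hmap u) (hmap v) < e"
  proof (intro exI conjI allI impI)
    show "0 < r" by (rule r)
    fix v assume v: "v \<in> C \<and> D u v < r"
    have d1: "D u v \<le> 1" and d2: "D u v \<le> dl u / 2" and d3: "D u v \<le> e / (2 * K)" using v by (auto simp: r_def)
    have "D (hmap u) (hmap v) \<le> K * D u v" using hmap_lip[OF u _ d1 d2] v by (simp add: K_def)
    also have "\<dots> \<le> K * (e / (2 * K))" using d3 K by (intro mult_left_mono) auto
    also have "\<dots> < e" using K e by simp
    finally show "D (hmap u) (hmap v) < e" .
  qed
qed

lemma Z_cov: "\<exists>f. continuous_map LM.mtopology LM.mtopology f \<and> f ` topspace LM.mtopology \<inter> A = {} \<and>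
        (\<forall>z\<in>topspace LM.mtopology. \<exists>U\<in>Uc. z \<in> U \<and> f z \<in> U)"
proof (intro exI conjI ballI)
  show "continuous_map LM.mtopology LM.mtopology hmap" by (rule hmap_cont)
  show "hmap ` topspace LM.mtopology \<inter> A = {}" using hmap_notA by auto
  fix z assume z: "z \<in> topspace LM.mtopology"
  hence zC: "z \<in> C" by simp
  obtain V where V: "V \<in> Uc" "LM.mball z (dl z / 2) \<subseteq> V" using dl_ball[OF zC] by blast
  have "z \<in> LM.mball z (dl z / 2)" using zC dl_pos[OF zC] by simp
  moreover have "hmap z \<in> LM.mball z (dl z / 2)" using zC hmap_C[OF zC] D_small[OF zC] by simp
  ultimately show "\<exists>U\<in>Uc. z \<in> U \<and> hmap z \<in> U" using V by blast
qed

end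

context ZS begin

lemma Z: "Z_set (Lp_topology M p) A"
  unfolding Z_set_def Lp_topology_def
proof (intro conjI allI impI)
  show "closedin LM.mtopology A" by (rule A_closed)
next
  fix Uc assume h: "(\<forall>U\<in>Uc. openin LM.mtopology U) \<and> \<Union>Uc = topspace LM.mtopology"
  interpret ZC M p B P Uc
    by unfold_locales (use h in auto)
  show "\<exists>f. continuous_map LM.mtopology LM.mtopology f \<and> f ` topspace LM.mtopology \<inter> A = {} \<and>
        (\<forall>z\<in>topspace LM.mtopology. \<exists>U\<in>Uc. z \<in> U \<and> f z \<in> U)"
    by (rule Z_cov)
qed

end


locale Geo =
  fixes M :: "'a measure" and d :: "'a \<Rightarrow> 'a \<Rightarrow> real"
  assumes metric: "Metric_space (space M) d"
  and balls: "\<forall>x\<in>X0 M. (\<forall>r>0. Metric_space.mball (space M) d x r \<in> sets M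
                   \<and> emeasure M (Metric_space.mball (space M) d x r) > 0)
               \<and> (\<exists>r>0. emeasure M (Metric_space.mball (space M) d x r) < \<infinity>)"
begin

sublocale MS: Metric_space "space M" d by (rule metric)

lemma ball_sets: "x \<in> X0 M \<Longrightarrow> 0 < r \<Longrightarrow> MS.mball x r \<in> sets M"
  using balls by blast
lemma ball_pos: "x \<in> X0 M \<Longrightarrow> 0 < r \<Longrightarrow> 0 < emeasure M (MS.mball x r)"
  using balls by blast
lemma X0D: "x \<in> X0 M \<Longrightarrow> x \<in> space M \<and> {x} \<in> sets M \<and> emeasure M {x} = 0"
  by (simp add: X0_def)

lemma step:
  assumes q: "q \<in> X0 M" and s: "0 < s"
  shows "\<exists>z. 0 < snd (snd z) \<and> snd (snd z) < s \<and> 0 < fst (snd z) \<and>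
           MS.mball (fst z) (fst (snd z)) \<subseteq> MS.mball q s \<and>
           MS.mball (fst z) (fst (snd z)) \<inter> MS.mball q (snd (snd z)) = {} \<and> fst z \<in> MS.mball q s"
proof -
  have qs: "q \<in> space M" "{q} \<in> sets M" "emeasure M {q} = 0" using X0D[OF q] by auto
  have "MS.mball q s \<noteq> {q}" using ball_pos[OF q s] qs(3) by auto
  moreover have "q \<in> MS.mball q s" using qs s by simp
  ultimately obtain y where y: "y \<in> MS.mball q s" "y \<noteq> q" by blast
  define \<rho> where "\<rho> = d q y"
  have yM: "y \<in> space M" using y by simp
  have \<rho>: "0 < \<rho>" "\<rho> < s" using y qs MS.mdist_pos_less[of q y] by (auto simp: \<rho>_def)
  define t where "t = min (\<rho>/2) (s - \<rho>)"
  have t: "0 < t" using \<rho> by (simp add: t_def)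
  show ?thesis
  proof (rule exI[of _ "(y, t, \<rho>/2)"], simp only: fst_conv snd_conv, intro conjI)
    show "0 < \<rho>/2" "\<rho>/2 < s" "0 < t" using \<rho> t by auto
    show "y \<in> MS.mball q s" by (rule y(1))
    show "MS.mball y t \<subseteq> MS.mball q s"
    proof
      fix z assume z: "z \<in> MS.mball y t"
      hence zM: "z \<in> space M" and "d y z < t" by auto
      moreover have "d q z \<le> d q y + d y z" using MS.triangle[OF qs(1) yM zM] .
      ultimately have "d q z < s" unfolding \<rho>_def[symmetric] t_def by linarith
      thus "z \<in> MS.mball q s" using qs zM by simp
    qed
    show "MS.mball y t \<inter> MS.mball q (\<rho>/2) = {}"
    proof (rule equals0I)
      fix z assume z: "z \<in> MS.mball y t \<inter> MS.mball q (\<rho>/2)"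
      hence zM: "z \<in> space M" and a: "d y z < t" and b: "d q z < \<rho>/2" by auto
      have "d q y \<le> d q z + d z y" using MS.triangle[OF qs(1) zM yM] .
      moreover have "d z y = d y z" by (rule MS.commute)
      ultimately show False using a b unfolding \<rho>_def[symmetric] t_def by linarith
    qed
  qed
qed

lemma seq:
  assumes q: "q \<in> X0 M" and r: "0 < r" and sub: "MS.mball q r \<subseteq> X0 M"
  shows "\<exists>P::nat \<Rightarrow> 'a set. (\<forall>k. P k \<in> sets M \<and> P k \<subseteq> MS.mball q r \<and> 0 < emeasure M (P k)) \<and> disjoint_family P"
proof -
  define Pr where "Pr s z \<longleftrightarrow> 0 < snd (snd z) \<and> snd (snd z) < s \<and> 0 < fst (snd z) \<and>
           MS.mball (fst z) (fst (snd z)) \<subseteq> MS.mball q s \<and>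
           MS.mball (fst z) (fst (snd z)) \<inter> MS.mball q (snd (snd z)) = {} \<and> fst z \<in> MS.mball q s" for s z
  define g where "g s = (SOME z. Pr s z)" for s
  have g: "Pr s (g s)" if "0 < s" for s
    unfolding g_def using step[OF q that] unfolding Pr_def[symmetric] by (rule someI_ex)
  define rad where "rad = rec_nat r (\<lambda>_ s. snd (snd (g s)))"
  have rad0: "rad 0 = r" and radS: "rad (Suc k) = snd (snd (g (rad k)))" for k by (simp_all add: rad_def)
  have radp: "0 < rad k" for k
  proof (induction k)
    case 0 show ?case by (simp add: rad0 r)
  next
    case (Suc k)
    have "Pr (rad k) (g (rad k))" by (rule g[OF Suc.IH])
    thus ?case by (simp add: radS Pr_def)
  qed
  have radlt: "rad (Suc k) < rad k" for k using g[OF radp[of k]] by (simp add: radS Pr_def)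
  have radmono: "rad k \<le> rad j" if "j \<le> k" for j k
  proof -
    have "decseq rad" by (rule decseq_SucI) (simp add: less_imp_le[OF radlt])
    thus ?thesis using that by (simp add: decseq_def)
  qed
  define P where "P k = MS.mball (fst (g (rad k))) (fst (snd (g (rad k))))" for k
  have gk: "Pr (rad k) (g (rad k))" for k by (rule g[OF radp])
  have Psub: "P k \<subseteq> MS.mball q (rad k)" for k using gk[of k] unfolding P_def Pr_def by blast
  have Pdis: "P k \<inter> MS.mball q (rad (Suc k)) = {}" for k using gk[of k] unfolding P_def Pr_def radS by blast
  have ctr: "fst (g (rad k)) \<in> MS.mball q (rad k)" for k using gk[of k] unfolding Pr_def by blast
  have ballsub: "MS.mball q (rad k) \<subseteq> MS.mball q r" for k
    using radmono[of 0 k] by (intro MS.mball_subset_concentric) (simp add: rad0)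
  have ctrX: "fst (g (rad k)) \<in> X0 M" for k using ctr[of k] ballsub[of k] sub by blast
  have tpos: "0 < fst (snd (g (rad k)))" for k using gk[of k] unfolding Pr_def by blast
  have h1: "\<forall>k. P k \<in> sets M \<and> P k \<subseteq> MS.mball q r \<and> 0 < emeasure M (P k)"
  proof (intro allI conjI)
    fix k
    show "P k \<in> sets M" unfolding P_def by (rule ball_sets[OF ctrX tpos])
    show "P k \<subseteq> MS.mball q r" using Psub[of k] ballsub[of k] by blast
    show "0 < emeasure M (P k)" unfolding P_def by (rule ball_pos[OF ctrX tpos])
  qed
  have h2: "disjoint_family P"
      unfolding disjoint_family_on_def
    proof (intro ballI impI)
      fix j k :: nat assume "j \<noteq> k"
      hence jk0: "j < k \<or> k < j" by arith
      have djk: "P j \<inter> P k = {}" if jk: "j < k" for j k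
      proof -
        have "MS.mball q (rad k) \<subseteq> MS.mball q (rad (Suc j))"
          using radmono[of "Suc j" k] jk by (intro MS.mball_subset_concentric) simp
        thus ?thesis using Psub[of k] Pdis[of j] by blast
      qed
      show "P j \<inter> P k = {}"
      proof (cases "j < k")
        case True thus ?thesis by (rule djk)
      next
        case False hence "k < j" using jk0 by simp
        hence "P k \<inter> P j = {}" by (rule djk)
        thus ?thesis by (simp add: Int_commute)
      qed
    qed
  show ?thesis by (rule exI, rule conjI[OF h1 h2])
qed

end


context LpS begin

lemma avg_bound:
  assumes S: "S \<in> sets M" "emeasure M S < \<infinity>" "0 < measure M S" and g: "Lpf g"
  and ae: "AE y in M. y \<in> S \<longrightarrow> \<bar>g y - c\<bar> \<le> 1/2"
  shows "\<bar>avg M S g - c\<bar> \<le> 1/2"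
proof -
  have gm: "g \<in> borel_measurable M" using g by (simp add: Lpf_def)
  have ig: "integrable M (\<lambda>x. g x * indicator S x)" by (rule integrable_on_set[OF g S(1,2)])
  have iS: "integrable M (\<lambda>x. c * indicator S x :: real)" using S by (simp add: less_top[symmetric])
  have iS2: "integrable M (\<lambda>x. 1/2 * indicator S x :: real)" using S by (simp add: less_top[symmetric])
  have Ssp: "S \<inter> space M = S" using S(1) sets.sets_into_space by blast
  have intS: "(\<integral>x. c' * indicator S x \<partial>M) = c' * measure M S" for c' :: real
    using S Ssp by (simp add: less_top[symmetric])
  have "(\<integral>x. g x * indicator S x \<partial>M) - c * measure M S = (\<integral>x. (g x - c) * indicator S x \<partial>M)"
    using ig iS intS[of c] Ssp by (simp add: left_diff_distrib)
  also have "\<bar>\<dots>\<bar> \<le> (\<integral>x. \<bar>(g x - c) * indicator S x\<bar> \<partial>M)" by (rule integral_abs_bound)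
  also have "\<dots> \<le> (\<integral>x. 1/2 * indicator S x \<partial>M)"
  proof (rule integral_mono_AE)
    show "integrable M (\<lambda>x. \<bar>(g x - c) * indicator S x\<bar>)"
      using ig iS by (simp add: left_diff_distrib)
    show "integrable M (\<lambda>x. 1/2 * indicator S x :: real)" by (rule iS2)
    show "AE x in M. \<bar>(g x - c) * indicator S x\<bar> \<le> 1/2 * indicator S x"
      using ae by (rule eventually_mono) (auto simp: indicator_def abs_mult)
  qed
  also have "\<dots> = measure M S / 2" using intS[of "1/2"] by simp
  finally have "\<bar>(\<integral>x. g x * indicator S x \<partial>M) - c * measure M S\<bar> \<le> measure M S / 2" .
  hence "\<bar>(\<integral>x. g x * indicator S x \<partial>M) - c * measure M S\<bar> / measure M S \<le> 1/2"
    using S(3) by (simp add: divide_le_eq)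
  moreover have "avg M S g - c = ((\<integral>x. g x * indicator S x \<partial>M) - c * measure M S) / measure M S"
    using S(3) by (simp add: avg_def diff_divide_distrib)
  moreover have "\<bar>((\<integral>x. g x * indicator S x \<partial>M) - c * measure M S) / measure M S\<bar>
      = \<bar>(\<integral>x. g x * indicator S x \<partial>M) - c * measure M S\<bar> / measure M S"
    using S(3) by (simp add: abs_divide)
  ultimately show ?thesis by (simp only:)
qed

end

context Geo begin

lemma cont_pt:
  assumes f: "continuous_map (subtopology MS.mtopology (space M - E)) euclideanreal f"
  and x: "x \<in> space M - E" and e: "0 < e"
  shows "\<exists>\<rho>>0. \<forall>y\<in>space M - E. d x y < \<rho> \<longrightarrow> \<bar>f y - f x\<bar> < e"
proof -
  let ?X = "subtopology MS.mtopology (space M - E)"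
  have op: "openin euclideanreal (ball (f x) e)" by simp
  have "\<forall>U. openin euclideanreal U \<longrightarrow> openin ?X {z \<in> topspace ?X. f z \<in> U}"
    using f unfolding continuous_map_def by (rule conjunct2)
  hence o1: "openin ?X {z \<in> topspace ?X. f z \<in> ball (f x) e}" using op by (elim allE[of _ "ball (f x) e"]) (erule mp)
  have ts: "topspace ?X = space M - E" by (auto simp: topspace_subtopology)
  have o2: "openin ?X {z \<in> space M - E. f z \<in> ball (f x) e}" using o1 unfolding ts .
  obtain T where T: "openin MS.mtopology T" "{z \<in> space M - E. f z \<in> ball (f x) e} = T \<inter> (space M - E)"
    using o2 unfolding openin_subtopology by (elim exE conjE)
  have "x \<in> {z \<in> space M - E. f z \<in> ball (f x) e}" using x e by simp
  hence "x \<in> T" unfolding T(2) by (rule IntD1)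
  then obtain \<rho> where \<rho>: "0 < \<rho>" "MS.mball x \<rho> \<subseteq> T"
    using T(1) unfolding MS.openin_mtopology by (elim conjE allE impE exE) auto
  show ?thesis
  proof (intro exI conjI ballI impI)
    show "0 < \<rho>" by (rule \<rho>(1))
    fix y assume y: "y \<in> space M - E" "d x y < \<rho>"
    have "x \<in> space M" using x by simp
    hence "y \<in> MS.mball x \<rho>" using y by simp
    hence "y \<in> T" using \<rho>(2) by (rule subsetD[rotated])
    hence "y \<in> T \<inter> (space M - E)" using y(1) by (rule IntI)
    hence "y \<in> {z \<in> space M - E. f z \<in> ball (f x) e}" unfolding T(2) .
    hence "dist (f x) (f y) < e" by simp
    thus "\<bar>f y - f x\<bar> < e" by (simp add: dist_real_def)
  qed
qed

lemma unif_cont_map: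
  assumes f: "unif_cont_on (space M) d f"
  shows "continuous_map (subtopology MS.mtopology (space M - {})) euclideanreal f"
proof -
  have "continuous_map MS.mtopology euclideanreal f"
    unfolding continuous_map_def
  proof (intro conjI allI impI)
    show "f \<in> topspace MS.mtopology \<rightarrow> topspace euclideanreal" by simp
    fix U :: "real set" assume "openin euclideanreal U"
    hence U: "open U" by simp
    show "openin MS.mtopology {x \<in> topspace MS.mtopology. f x \<in> U}"
      unfolding MS.openin_mtopology
    proof (intro conjI allI impI)
      show "{x \<in> topspace MS.mtopology. f x \<in> U} \<subseteq> space M" by auto
      fix x assume x: "x \<in> {x \<in> topspace MS.mtopology. f x \<in> U}"
      then obtain e where e: "0 < e" "ball (f x) e \<subseteq> U" using U open_contains_ball by force
      obtain \<delta> where \<delta>: "0 < \<delta>" "\<forall>x\<in>space M. \<forall>y\<in>space M. d x y < \<delta> \<longrightarrow> \<bar>f x - f y\<bar> < e"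
        using f e unfolding unif_cont_on_def by blast
      show "\<exists>r>0. MS.mball x r \<subseteq> {x \<in> topspace MS.mtopology. f x \<in> U}"
      proof (intro exI conjI)
        show "0 < \<delta>" by (rule \<delta>(1))
        show "MS.mball x \<delta> \<subseteq> {x \<in> topspace MS.mtopology. f x \<in> U}"
        proof
          fix y assume y: "y \<in> MS.mball x \<delta>"
          hence "\<bar>f x - f y\<bar> < e" using \<delta>(2) by auto
          hence "f y \<in> ball (f x) e" by (simp add: dist_real_def)
          thus "y \<in> {x \<in> topspace MS.mtopology. f x \<in> U}" using e y by auto
        qed
      qed
    qed
  qed
  thus ?thesis by simp
qed

lemma x0_exists:
  assumes nd: "MS.mtopology closure_of (space M - X0 M) \<noteq> space M"
  shows "\<exists>x0 r0. x0 \<in> X0 M \<and> 0 < r0 \<and> MS.mball x0 r0 \<subseteq> X0 M \<and> emeasure M (MS.mball x0 r0) < \<infinity>"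
proof -
  have "MS.mtopology closure_of (space M - X0 M) \<subseteq> space M"
    using closure_of_subset_topspace[of MS.mtopology] by simp
  then obtain x0 where x0: "x0 \<in> space M" "x0 \<notin> MS.mtopology closure_of (space M - X0 M)" using nd by blast
  then obtain r where r: "0 < r" "\<forall>y\<in>space M - X0 M. y \<notin> MS.mball x0 r"
    unfolding MS.metric_closure_of by blast
  have sub: "MS.mball x0 r \<subseteq> X0 M" using r by auto
  have x0X: "x0 \<in> X0 M" using sub x0 r by auto
  obtain r' where r': "0 < r'" "emeasure M (MS.mball x0 r') < \<infinity>" using balls x0X by blast
  define r0 where "r0 = min r r'"
  have r0: "0 < r0" using r r' by (simp add: r0_def)
  have "emeasure M (MS.mball x0 r0) \<le> emeasure M (MS.mball x0 r')"
    by (rule emeasure_mono) (auto simp: r0_def ball_sets[OF x0X r'(1)])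
  hence fin: "emeasure M (MS.mball x0 r0) < \<infinity>" using r' by (meson le_less_trans)
  have "MS.mball x0 r0 \<subseteq> X0 M" using sub by (auto simp: r0_def)
  thus ?thesis using x0X r0 fin by blast
qed

lemma dense_exists:
  assumes sep: "separable_space MS.mtopology"
  shows "\<exists>Dn. countable Dn \<and> Dn \<subseteq> space M \<and> (\<forall>x\<in>space M. \<forall>e>0. \<exists>q\<in>Dn. d x q < e)"
proof -
  obtain Dn where Dn: "countable Dn" "Dn \<subseteq> space M" "MS.mtopology closure_of Dn = space M"
    using sep unfolding separable_space_def by auto
  have "\<forall>x\<in>space M. \<forall>e>0. \<exists>q\<in>Dn. d x q < e"
  proof (intro ballI allI impI)
    fix x and e :: real assume x: "x \<in> space M" and e: "0 < e"
    hence "x \<in> MS.mtopology closure_of Dn" using Dn(3) by simp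
    then obtain q where "q \<in> Dn" "q \<in> MS.mball x e" using e unfolding MS.metric_closure_of by blast
    thus "\<exists>q\<in>Dn. d x q < e" by auto
  qed
  thus ?thesis using Dn by blast
qed

end


theorem mainTheorem6:
  fixes M :: "'a measure" and d :: "'a \<Rightarrow> 'a \<Rightarrow> real" and p :: real
  assumes metric: "Metric_space (space M) d"
    and separable: "separable_space (Metric_space.mtopology (space M) d)"
    and p: "1 \<le> p"
    and balls: "\<forall>x\<in>X0 M. (\<forall>r>0. Metric_space.mball (space M) d x r \<in> sets M
                   \<and> emeasure M (Metric_space.mball (space M) d x r) > 0)
               \<and> (\<exists>r>0. emeasure M (Metric_space.mball (space M) d x r) < \<infinity>)"
    and not_dense: "Metric_space.mtopology (space M) d closure_of (space M - X0 M) \<noteq> space M"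
  shows "(\<exists>S. Z_sigma_set (Lp_topology M p) S \<and> Ca M d p \<subseteq> S)
       \<and> (\<exists>S. Z_sigma_set (Lp_topology M p) S \<and> Cu M d p \<subseteq> S)"
proof -
  interpret G: Geo M d by (rule Geo.intro[OF metric balls])
  interpret L: LpS M p by (unfold_locales) (rule p)
  obtain x0 r0 where x0: "x0 \<in> X0 M" "0 < r0" "G.MS.mball x0 r0 \<subseteq> X0 M" "emeasure M (G.MS.mball x0 r0) < \<infinity>"
    using G.x0_exists[OF not_dense] by blast
  have x0M: "x0 \<in> space M" using x0(1) G.X0D by blast
  obtain Dn where Dn: "countable Dn" "Dn \<subseteq> space M" "\<forall>x\<in>space M. \<forall>e>0. \<exists>q\<in>Dn. d x q < e"
    using G.dense_exists[OF separable] by blast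
  define I where "I = {(q, n::nat). q \<in> Dn \<and> G.MS.mball q (1 / real (Suc n)) \<subseteq> G.MS.mball x0 r0}"
  define Bl where "Bl i = G.MS.mball (fst i) (1 / real (Suc (snd i)))" for i :: "'a \<times> nat"
  have ZSi: "\<exists>P. ZS M p (Bl i) P" if i: "i \<in> I" for i
  proof -
    obtain q n where qn: "i = (q, n)" by (cases i)
    have q: "q \<in> Dn" and sub: "G.MS.mball q (1 / real (Suc n)) \<subseteq> G.MS.mball x0 r0" using i by (auto simp: I_def qn)
    have qM: "q \<in> space M" using q Dn(2) by blast
    have rpos: "0 < 1 / real (Suc n)" by simp
    have subX: "G.MS.mball q (1 / real (Suc n)) \<subseteq> X0 M" using sub x0(3) by blast
    have qX: "q \<in> X0 M" using subX qM rpos by auto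
    obtain P :: "nat \<Rightarrow> 'a set" where P: "\<forall>k. P k \<in> sets M \<and> P k \<subseteq> G.MS.mball q (1 / real (Suc n)) \<and> 0 < emeasure M (P k)"
      "disjoint_family P"
      using G.seq[OF qX rpos subX] by blast
    have Bs: "Bl i \<in> sets M" unfolding Bl_def qn fst_conv snd_conv by (rule G.ball_sets[OF qX rpos])
    have "emeasure M (Bl i) \<le> emeasure M (G.MS.mball x0 r0)"
      by (rule emeasure_mono) (use sub G.ball_sets[OF x0(1) x0(2)] in \<open>auto simp: Bl_def qn\<close>)
    hence Bf: "emeasure M (Bl i) < \<infinity>" using x0(4) by (meson le_less_trans)
    have "ZS M p (Bl i) P"
    proof (intro ZS.intro ZS_axioms.intro)
      show "LpS p" using p by (rule LpS.intro)
      show "Bl i \<in> sets M" by (rule Bs)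
      show "emeasure M (Bl i) < \<infinity>" by (rule Bf)
      show "\<And>k. P k \<in> sets M" using P by blast
      show "\<And>k. P k \<subseteq> Bl i" using P by (simp add: Bl_def qn)
      show "\<And>k. 0 < emeasure M (P k)" using P by blast
      show "disjoint_family P" by (rule P(2))
    qed
    thus ?thesis by blast
  qed
  define Af where "Af i = ZS.A M p (Bl i)" for i
  have Zi: "Z_set (Lp_topology M p) (Af i)" if "i \<in> I" for i
    using ZSi[OF that] ZS.Z unfolding Af_def by blast
  have cI: "countable I"
  proof (rule countable_subset)
    show "I \<subseteq> Dn \<times> (UNIV :: nat set)" by (auto simp: I_def)
    show "countable (Dn \<times> (UNIV :: nat set))" using Dn(1) by simp
  qed
  have ZSS: "Z_sigma_set (Lp_topology M p) (\<Union> (Af ` I))"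
    unfolding Z_sigma_set_def using cI Zi by (intro exI[of _ "Af ` I"]) auto
  have CaS: "Ca M d p \<subseteq> \<Union> (Af ` I)"
  proof
    fix U assume U: "U \<in> Ca M d p"
    then obtain f E where UC: "U \<in> Lp_carrier M p" and fU: "f \<in> U" and E: "E \<in> null_sets M"
      and cont: "continuous_map (subtopology G.MS.mtopology (space M - E)) euclideanreal f"
      unfolding Ca_def by blast
    have "\<not> G.MS.mball x0 r0 \<subseteq> E"
    proof
      assume "G.MS.mball x0 r0 \<subseteq> E"
      hence "emeasure M (G.MS.mball x0 r0) \<le> emeasure M E"
        using E by (intro emeasure_mono) auto
      moreover have "emeasure M E = 0" using E by (rule null_setsD1)
      ultimately show False using G.ball_pos[OF x0(1) x0(2)] by simp
    qed
    then obtain x where x: "x \<in> G.MS.mball x0 r0" "x \<notin> E" by blast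
    have xM: "x \<in> space M" using x by simp
    obtain \<rho> where \<rho>: "0 < \<rho>" "\<forall>y\<in>space M - E. d x y < \<rho> \<longrightarrow> \<bar>f y - f x\<bar> < 1/2"
      using G.cont_pt[OF cont, of x "1/2"] x xM by auto
    define \<eta> where "\<eta> = min \<rho> (r0 - d x0 x)"
    have \<eta>: "0 < \<eta>" using \<rho> x by (simp add: \<eta>_def)
    obtain n where n: "inverse (real (Suc n)) < \<eta> / 2" using reals_Archimedean[of "\<eta>/2"] \<eta> by auto
    define rr where "rr = 1 / real (Suc n)"
    have rr: "0 < rr" "2 * rr < \<eta>" using n by (auto simp: rr_def inverse_eq_divide)
    obtain q where q: "q \<in> Dn" "d x q < rr" using Dn(3) xM rr(1) by blast
    have qM: "q \<in> space M" using q Dn(2) by blast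
    have ballx: "d x y < 2 * rr" if y: "y \<in> G.MS.mball q rr" for y
    proof -
      have yM: "y \<in> space M" using y by simp
      have "d x y \<le> d x q + d q y" by (rule G.MS.triangle[OF xM qM yM])
      thus ?thesis using q y by simp
    qed
    have sub0: "G.MS.mball q rr \<subseteq> G.MS.mball x0 r0"
    proof
      fix y assume y: "y \<in> G.MS.mball q rr"
      have yM: "y \<in> space M" using y by simp
      have "d x0 y \<le> d x0 x + d x y" by (rule G.MS.triangle[OF x0M xM yM])
      moreover have "d x y < \<eta>" using ballx[OF y] rr by simp
      ultimately have "d x0 y < r0" by (simp add: \<eta>_def)
      thus "y \<in> G.MS.mball x0 r0" using x0M yM by simp
    qed
    define i where "i = (q, n)"
    have iI: "i \<in> I" using q(1) sub0 by (simp add: I_def i_def rr_def)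
    have Bli: "Bl i = G.MS.mball q rr" by (simp add: Bl_def i_def rr_def)
    obtain P where ZP: "ZS M p (Bl i) P" using ZSi[OF iI] by blast
    interpret Z: ZS M p "Bl i" P by (rule ZP)
    have fin: "emeasure M S < \<infinity>" if "S \<subseteq> Bl i" "S \<in> sets M" for S using Z.fin_sub that by blast
    have aeS: "AE y in M. y \<in> S \<longrightarrow> \<bar>L.rep U y - f x\<bar> \<le> 1/2" if S: "S \<subseteq> Bl i" for S
    proof -
      have "AE y in M. y \<notin> E" by (rule AE_not_in[OF E])
      moreover have "AE y in M. f y = L.rep U y" by (rule L.C_mem(2)[OF UC fU])
      moreover have "AE y in M. y \<in> space M" by (rule AE_space)
      ultimately show ?thesis
      proof eventually_elim
        case (elim y)
        show ?case
        proof
          assume yS: "y \<in> S"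
          hence "d x y < 2 * rr" using S Bli ballx by blast
          hence "d x y < \<rho>" using rr by (simp add: \<eta>_def)
          hence "\<bar>f y - f x\<bar> < 1/2" using \<rho>(2) elim by blast
          thus "\<bar>L.rep U y - f x\<bar> \<le> 1/2" using elim by simp
        qed
      qed
    qed
    have "U \<in> Z.A"
      unfolding Z.A_def
    proof (intro CollectI conjI allI impI)
      show "U \<in> Lp_carrier M p" by (rule UC)
      fix S1 S2 assume S1: "S1 \<in> sets M" and S2: "S2 \<in> sets M" and S1B: "S1 \<subseteq> Bl i" and S2B: "S2 \<subseteq> Bl i"
        and m1: "0 < measure M S1" and m2: "0 < measure M S2"
      have a1: "\<bar>avg M S1 (L.rep U) - f x\<bar> \<le> 1/2"
        by (rule L.avg_bound[OF S1 fin[OF S1B S1] m1 L.rep_Lpf[OF UC] aeS[OF S1B]])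
      have a2: "\<bar>avg M S2 (L.rep U) - f x\<bar> \<le> 1/2"
        by (rule L.avg_bound[OF S2 fin[OF S2B S2] m2 L.rep_Lpf[OF UC] aeS[OF S2B]])
      show "\<bar>avg M S1 (L.rep U) - avg M S2 (L.rep U)\<bar> \<le> 1" using a1 a2 by linarith
    qed
    thus "U \<in> \<Union> (Af ` I)" using iI unfolding Af_def by blast
  qed
  have CuCa: "Cu M d p \<subseteq> Ca M d p"
  proof
    fix U assume "U \<in> Cu M d p"
    then obtain f where UC: "U \<in> Lp_carrier M p" and fU: "f \<in> U" and uf: "unif_cont_on (space M) d f"
      unfolding Cu_def by blast
    have "continuous_map (subtopology G.MS.mtopology (space M - {})) euclideanreal f"
      by (rule G.unif_cont_map[OF uf])
    moreover have "{} \<in> null_sets M" by simp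
    ultimately show "U \<in> Ca M d p" unfolding Ca_def using UC fU by blast
  qed
  show ?thesis using ZSS CaS CuCa by blast
qed


end
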